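(* For $\mathbf{q}, \mathbf{r}\in(\mathbb{Z}_{\ge0})^{n}$ with $n\ge1$, we have \[\frac{d}{d\sigma}f_{\mathbf{q}}^{\mathbf{r}}(\sigma) = i(i\sigma)^{q_{n}}\left(\mathrm{Li}_{1}(e^{i\sigma})\right)^{r_{n}}f_{\mathbf{q}_{-}}^{\mathbf{r}_{-}}(\sigma).\]
   Context: Notation: $|\mathbf{k}|=k_1+\dots+k_n$, $\mathbf{k}_{-}=(k_1,\dots,k_{n-1})$. $\mathrm{Li}_{\mathbf{k}}(z)=\sum_{0<m_1<\dots<m_n} z^{m_n}/(m_1^{k_1}\cdots m_n^{k_n})$, $\mathrm{Li}_\emptyset=1$; $\sigma\in[0,2\pi]$. Let $B_{\mathbf{q}}=\frac{1}{|\mathbf{q}|+n}B_{\mathbf{q}_-}$, $B_\emptyset=1$; $C_{\mathbf{q}}^{\mathbf{j}}=(-1)^{j_n}\frac{(|\mathbf{q}|-|\mathbf{j}_-|)!}{(|\mathbf{q}|-|\mathbf{j}|)!}C_{\mathbf{q}_-}^{\mathbf{j}_-}$, $C_\emptyset^\emptyset=1$. Write $\mathbf{j}\preceq\mathbf{q}$ if $j_1+\dots+j_s\le q_1+\dots+q_s$ for all $s$. Let $\mathfrak{H}=\mathbb{Q}\langle e_0,e_1\rangle$, $\mathfrak{H}^1=\mathbb{Q}+e_1\mathfrak{H}$, with shuffle product $\sqcup\!\sqcup$: $w\sqcup\!\sqcup 1=1\sqcup\!\sqcup w=w$, $u_1w_1\sqcup\!\sqcup u_2w_2=u_1(w_1\sqcup\!\sqcup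 u_2w_2)+u_2(u_1w_1\sqcup\!\sqcup w_2)$ ($u_i\in\{e_0,e_1\}$), $\mathbb{Q}$-bilinear. Define $w_{\mathbf{j}}^{\mathbf{r}}=(w_{\mathbf{j}_-}^{\mathbf{r}_-}\sqcup\!\sqcup e_1^{\sqcup\!\sqcup r_n})e_0^{1+j_n}$, $w_\emptyset^\emptyset=1$ ($e_1^{\sqcup\!\sqcup r}$ = $r$-fold shuffle of $e_1$). $L(\cdot;z):\mathfrak{H}^1\to\mathbb{C}$ is $\mathbb{Q}$-linear with $L(e_1e_0^{k_1-1}\cdots e_1e_0^{k_n-1};z)=\mathrm{Li}_{k_1,\dots,k_n}(z)$, $L(1;z)=1$ (it satisfies $L(w_1;z)L(w_2;z)=L(w_1\sqcup\!\sqcup w_2;z)$). For $\mathbf{q},\mathbf{r}\in(\mathbb{Z}_{\ge0})^n$ write $\mathbf{r}=(\{0\}^{n'},r''_1,\dots,r''_{n''})=(\mathbf{r}',\mathbf{r}'')$ with $r''_1\ge1$, $\mathbf{q}=(\mathbf{q}',\mathbf{q}'')$ with $\mathbf{q}'$ of length $n'$, and $\overline{\mathbf{q}}=(|\mathbf{q}'|+n'+q''_1,q''_2,\dots,q''_{n''})$ (or $\emptyset$ if $\mathbf{q}''=\emptyset$). Define $f_{\mathbf{q}}^{\mathbf{r}}(\sigma)=B_{\mathbf{q}'}\sum_{\mathbf{j}\preceq\overline{\mathbf{q}}}C_{\overline{\mathbf{q}}}^{\mathbf{j}}(i\sigma)^{|\mathbf{q}|+n'-|\mathbf{j}|}L(w_{\mathbf{j}}^{\mathbf{r}''};e^{i\sigma})$,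 sum over $\mathbf{j}\in(\mathbb{Z}_{\ge0})^{n''}$; thus $f_{\emptyset}^{\emptyset}=1$ and $f_{\mathbf{q}}^{\mathbf{r}}(\sigma)=B_{\mathbf{q}}(i\sigma)^{|\mathbf{q}|+n}$ if $\mathbf{r}=(\{0\}^n)$, $n\ge1$. *)

theory Defs
  imports "HOL-Analysis.Analysis"
begin

text \<open>Indices are lists of naturals (k_1,...,k_n).
  Hsum ks M = sum over 0<m_1<...<m_l<M of 1/(m_1^k_1 ... m_l^k_l).\<close>

function Hsum :: "nat list \<Rightarrow> nat \<Rightarrow> complex" where
  "Hsum ks M = (if ks = [] then 1
     else (\<Sum>m\<in>{1..<M}. Hsum (butlast ks) m / of_nat m ^ last ks))"
  by auto
termination by (relation "Wellfounded.measure (\<lambda>(ks, M). length ks)") auto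

text \<open>Li_k(z) = sum over 0<m_1<...<m_n of z^m_n/(m_1^k_1...m_n^k_n), the outer sum over
  m_n taken as an ordinary series (in increasing order of m_n); Li of the empty index is 1.\<close>
definition Li :: "nat list \<Rightarrow> complex \<Rightarrow> complex" where
  "Li ks z = (if ks = [] then 1
     else (\<Sum>M. z ^ Suc M / of_nat (Suc M) ^ last ks * Hsum (butlast ks) (Suc M)))"

datatype letter = e0 | e1

type_synonym word = "letter list"

text \<open>Elements of the noncommutative polynomial algebra with nonnegative integer
  coefficients are represented as lists of words (a word occurring m times has coefficient m).\<close>

fun shuf :: "'a list \<Rightarrow> 'a list \<Rightarrow> 'a list list" where
  "shuf [] v = [v]"
| "shuf u [] = [u]"
| "shuf (a # u) (b # v) = map (Cons a) (shuf u (b # v)) @ map (Cons b) (shuf (a # u) v)"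

definition shufL :: "word list \<Rightarrow> word list \<Rightarrow> word list" where
  "shufL xs ys = concat [shuf x y. x \<leftarrow> xs, y \<leftarrow> ys]"

definition e1pow :: "nat \<Rightarrow> word list" where
  "e1pow r = ((shufL [[e1]]) ^^ r) [[]]"

function wjr :: "nat list \<Rightarrow> nat list \<Rightarrow> word list" where
  "wjr j r = (if j = [] \<or> r = [] then [[]]
     else map (\<lambda>u. u @ replicate (Suc (last j)) e0)
            (shufL (wjr (butlast j) (butlast r)) (e1pow (last r))))"
  by auto
termination by (relation "Wellfounded.measure (\<lambda>(j, r). length j)") auto

text \<open>Index of a word e1 e0^(k_1-1) ... e1 e0^(k_n-1)\<close>
function word_idx :: "word \<Rightarrow> nat list" where
  "word_idx [] = []"
| "word_idx (e1 # w) = Suc (length (takeWhile (\<lambda>x. x = e0) w)) # word_idx (dropWhile (\<lambda>x. x = e0) w)"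
| "word_idx (e0 # w) = word_idx w"
  by pat_completeness auto
termination by (relation "Wellfounded.measure length") (auto simp: le_imp_less_Suc length_dropWhile_le)

text \<open>L(.;z) on words of H^1 (empty word or starting with e1); its value on other words
  is left unspecified.  Extended linearly to lists of words.\<close>
definition Lword :: "word \<Rightarrow> complex \<Rightarrow> complex" where
  "Lword w z = (if w = [] then 1 else if hd w = e1 then Li (word_idx w) z else undefined)"

definition L :: "word list \<Rightarrow> complex \<Rightarrow> complex" where
  "L ws z = (\<Sum>w\<leftarrow>ws. Lword w z)"

function Bc :: "nat list \<Rightarrow> real" where
  "Bc q = (if q = [] then 1 else Bc (butlast q) / (real (sum_list q) + real (length q)))"
  by auto
termination by (relation "Wellfounded.measure length") auto

function Cc :: "nat list \<Rightarrow> nat list \<Rightarrow> real" where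
  "Cc q j = (if q = [] \<or> j = [] then 1
     else (-1) ^ last j * fact (sum_list q - sum_list (butlast j)) / fact (sum_list q - sum_list j)
          * Cc (butlast q) (butlast j))"
  by auto
termination by (relation "Wellfounded.measure (\<lambda>(q, j). length q)") auto

definition idx_preceq :: "nat list \<Rightarrow> nat list \<Rightarrow> bool" where
  "idx_preceq j q = (\<forall>s\<le>length q. sum_list (take s j) \<le> sum_list (take s q))"

definition fqr :: "nat list \<Rightarrow> nat list \<Rightarrow> real \<Rightarrow> complex" where
  "fqr q r \<sigma> =
    (let n' = length (takeWhile (\<lambda>x. x = 0) r);
         r'' = dropWhile (\<lambda>x. x = 0) r;
         q' = take n' q;
         q'' = drop n' q;
         qbar = (if q'' = [] then [] else (sum_list q' + n' + hd q'') # tl q'')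
     in of_real (Bc q') *
        (\<Sum>j\<in>{j. length j = length qbar \<and> idx_preceq j qbar}.
            of_real (Cc qbar j) * (\<i> * of_real \<sigma>) ^ (sum_list q + n' - sum_list j)
            * L (wjr j r'') (exp (\<i> * of_real \<sigma>))))"

end

theory Submission
  imports Defs
begin


lemma sbp:
  fixes x y :: "nat \<Rightarrow> 'a::comm_ring"
  shows "(\<Sum>m\<in>{N..<N+d}. x m * y m) = x (N+d) * (\<Sum>m\<in>{N..<N+d}. y m)
           - (\<Sum>k\<in>{N..<N+d}. (x (Suc k) - x k) * (\<Sum>m\<in>{N..<Suc k}. y m))"
proof (induction d)
  case 0 then show ?case by simp
next
  case (Suc d)
  have e: "N + Suc d = Suc (N+d)" by simp
  have s: "\<And>g :: nat \<Rightarrow> 'a. sum g {N..<Suc (N+d)} = sum g {N..<N+d} + g (N+d)"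
    by (rule sum.atLeastLessThan_Suc) simp
  show ?case unfolding e s using Suc.IH by (simp add: algebra_simps)
qed

lemma geom_block:
  fixes z :: complex
  shows "(\<Sum>m\<in>{N..<N+d}. z^m) * (1 - z) = z^N - z^(N+d)"
proof (induction d)
  case 0 then show ?case by simp
next
  case (Suc d)
  have e: "N + Suc d = Suc (N+d)" by simp
  have s: "\<And>g :: nat \<Rightarrow> complex. sum g {N..<Suc (N+d)} = sum g {N..<N+d} + g (N+d)"
    by (rule sum.atLeastLessThan_Suc) simp
  have "(sum (\<lambda>m. z^m) {N..<N+d} + z^(N+d)) * (1 - z)
     = sum (\<lambda>m. z^m) {N..<N+d} * (1 - z) + z^(N+d) - z^(N+d) * z" by (simp add: algebra_simps)
  then show ?case unfolding e s using Suc.IH by simp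
qed

lemma geom_block_bound:
  fixes z :: complex
  assumes "norm z \<le> 1" "0 < \<delta>" "\<delta> \<le> norm (1 - z)" "N \<le> M"
  shows "norm (\<Sum>m\<in>{N..<M}. z^m) \<le> 2 / \<delta>"
proof -
  obtain d where M: "M = N + d" using assms(4) le_Suc_ex by blast
  have "norm (\<Sum>m\<in>{N..<M}. z^m) * norm (1 - z) = norm (z^N - z^(N+d))"
    using geom_block[of z N d] unfolding M by (metis norm_mult)
  also have "\<dots> \<le> norm (z^N) + norm (z^(N+d))" by (rule norm_triangle_ineq4)
  also have "\<dots> \<le> 1 + 1" using assms(1)
    by (intro add_mono) (simp_all add: norm_power power_le_one)
  finally have "norm (\<Sum>m\<in>{N..<M}. z^m) * norm (1 - z) \<le> 2" by simp
  moreover have "norm (\<Sum>m\<in>{N..<M}. z^m) * \<delta> \<le> norm (\<Sum>m\<in>{N..<M}. z^m) * norm (1 - z)"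
    using assms by (intro mult_left_mono) auto
  ultimately have "norm (\<Sum>m\<in>{N..<M}. z^m) * \<delta> \<le> 2" by linarith
  then show ?thesis using assms(2) by (simp add: field_simps)
qed

lemma dirichlet_tail:
  fixes a :: "nat \<Rightarrow> complex"
  assumes sa: "summable (\<lambda>k. norm (a (Suc k) - a k))" and a0: "a \<longlonglongrightarrow> 0"
    and d: "\<delta> > 0" and e: "\<epsilon> > 0"
  shows "\<exists>N. \<forall>m n z. N \<le> m \<longrightarrow> m \<le> n \<longrightarrow> norm z \<le> 1 \<longrightarrow> \<delta> \<le> norm (1 - z)
            \<longrightarrow> norm (\<Sum>k\<in>{m..<n}. a k * z^k) < \<epsilon>"
proof -
  define D where "D k = norm (a (Suc k) - a k)" for k
  have "D = (\<lambda>k. norm (a (Suc k) - a k))" by (simp add: fun_eq_iff D_def)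
  then have sD: "summable D" using sa by simp
  have "0 < \<epsilon> * \<delta> / 2" using d e by simp
  from suminf_exist_split[OF this sD] obtain N where
    N: "\<And>m. m \<ge> N \<Longrightarrow> norm (\<Sum>i. D (i + m)) < \<epsilon> * \<delta> / 2" by blast
  have sDm: "summable (\<lambda>i. D (i + m))" for m using summable_ignore_initial_segment[OF sD] by simp
  have Dnn: "D k \<ge> 0" for k by (simp add: D_def)
  have an: "norm (a n) \<le> (\<Sum>i. D (i + n))" for n
  proof -
    have "(\<lambda>i. a (Suc i + n) - a (i + n)) sums (0 - a (i0 + n))" if "i0 = 0" for i0
      using telescope_sums[of "\<lambda>i. a (i + n)" 0] that a0
      by (simp add: LIMSEQ_ignore_initial_segment)
    then have "(\<lambda>i. a (Suc i + n) - a (i + n)) sums (- a n)" by simp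
    then have "norm (a n) = norm (\<Sum>i. a (Suc i + n) - a (i + n))" by (simp add: sums_iff)
    also have "\<dots> \<le> (\<Sum>i. norm (a (Suc i + n) - a (i + n)))"
      by (rule summable_norm) (use sDm[of n] in \<open>simp add: D_def\<close>)
    finally show ?thesis by (simp add: D_def)
  qed
  have split: "(\<Sum>i. D (i + m)) = (\<Sum>k\<in>{m..<n}. D k) + (\<Sum>i. D (i + n))" if "m \<le> n" for m n
  proof -
    obtain d where n: "n = m + d" using \<open>m \<le> n\<close> le_Suc_ex by blast
    have "(\<Sum>i. D (i + m)) = (\<Sum>i. D (i + d + m)) + (\<Sum>i<d. D (i + m))"
      using suminf_split_initial_segment[OF sDm[of m], of d] by simp
    moreover have "(\<Sum>i<d. D (i + m)) = (\<Sum>k\<in>{m..<n}. D k)"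
      using sum.shift_bounds_nat_ivl[of D 0 m d] unfolding n by (simp add: atLeast0LessThan add.commute)
    ultimately show ?thesis unfolding n by (simp add: add_ac)
  qed
  show ?thesis
  proof (intro exI allI impI)
    fix m n :: nat and z :: complex assume mN: "N \<le> m" and mn: "m \<le> n" and z1: "norm z \<le> 1" and zd: "\<delta> \<le> norm (1 - z)"
    obtain d where n: "n = m + d" using mn le_Suc_ex by blast
    have G: "norm (\<Sum>i\<in>{m..<M}. z^i) \<le> 2 / \<delta>" if "m \<le> M" for M
      using geom_block_bound[OF z1 d zd that] .
    have "norm (\<Sum>k\<in>{m..<n}. a k * z^k) = norm (a n * (\<Sum>i\<in>{m..<n}. z^i)
           - (\<Sum>k\<in>{m..<n}. (a (Suc k) - a k) * (\<Sum>i\<in>{m..<Suc k}. z^i)))"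
      using sbp[of a "\<lambda>k. z^k" m d] unfolding n by simp
    also have "\<dots> \<le> norm (a n * (\<Sum>i\<in>{m..<n}. z^i))
           + norm (\<Sum>k\<in>{m..<n}. (a (Suc k) - a k) * (\<Sum>i\<in>{m..<Suc k}. z^i))"
      by (rule norm_triangle_ineq4)
    also have "\<dots> \<le> norm (a n) * (2 / \<delta>) + (\<Sum>k\<in>{m..<n}. D k * (2 / \<delta>))"
    proof (intro add_mono)
      show "norm (a n * (\<Sum>i\<in>{m..<n}. z^i)) \<le> norm (a n) * (2 / \<delta>)"
        unfolding norm_mult by (intro mult_left_mono G mn) simp
      show "norm (\<Sum>k\<in>{m..<n}. (a (Suc k) - a k) * (\<Sum>i\<in>{m..<Suc k}. z^i))
            \<le> (\<Sum>k\<in>{m..<n}. D k * (2 / \<delta>))"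
      proof (rule sum_norm_le)
        fix k assume k: "k \<in> {m..<n}"
        then have mk: "m \<le> Suc k" by simp
        show "norm ((a (Suc k) - a k) * (\<Sum>i\<in>{m..<Suc k}. z^i)) \<le> D k * (2 / \<delta>)"
          unfolding norm_mult D_def by (rule mult_left_mono[OF G[OF mk]]) simp
      qed
    qed
    also have "\<dots> \<le> (2 / \<delta>) * ((\<Sum>i. D (i + n)) + (\<Sum>k\<in>{m..<n}. D k))"
    proof -
      have "(\<Sum>k\<in>{m..<n}. D k * (2/\<delta>)) = (2/\<delta>) * (\<Sum>k\<in>{m..<n}. D k)"
        by (simp add: sum_distrib_right mult.commute del: times_divide_eq_left times_divide_eq_right)
      moreover have "norm (a n) * (2/\<delta>) \<le> (\<Sum>i. D (i+n)) * (2/\<delta>)"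
        using an[of n] d by (intro mult_right_mono) auto
      ultimately show ?thesis by (simp add: algebra_simps)
    qed
    also have "\<dots> = (2 / \<delta>) * (\<Sum>i. D (i + m))" using split[OF mn] by simp
    also have "\<dots> < (2 / \<delta>) * (\<epsilon> * \<delta> / 2)"
    proof -
      have "(\<Sum>i. D (i + m)) \<le> norm (\<Sum>i. D (i + m))" by simp
      then show ?thesis using N[OF mN] d by (intro mult_strict_left_mono) auto
    qed
    also have "\<dots> = \<epsilon>" using d by simp
    finally show "norm (\<Sum>k\<in>{m..<n}. a k * z^k) < \<epsilon>" .
  qed
qed

lemma telescope_pow:
  fixes \<rho> :: real
  shows "(\<Sum>k\<in>{m..<m+d}. \<rho>^k - \<rho>^Suc k) = \<rho>^m - \<rho>^(m+d)"
proof (induction d)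
  case 0 then show ?case by simp
next
  case (Suc d)
  have e: "m + Suc d = Suc (m+d)" by simp
  have s: "\<And>g :: nat \<Rightarrow> real. sum g {m..<Suc (m+d)} = sum g {m..<m+d} + g (m+d)"
    by (rule sum.atLeastLessThan_Suc) simp
  show ?case unfolding e s using Suc.IH by simp
qed

lemma abel_tail:
  fixes b :: "nat \<Rightarrow> complex"
  assumes sb: "summable b" and e: "\<epsilon> > 0"
  shows "\<exists>N. \<forall>m n \<rho>. N \<le> m \<longrightarrow> m \<le> n \<longrightarrow> \<rho> \<in> {0..1::real}
            \<longrightarrow> norm (\<Sum>k\<in>{m..<n}. b k * of_real \<rho> ^ k) < \<epsilon>"
proof -
  have "\<epsilon>/2 > 0" using e by simp
  with sb obtain N where N: "\<And>m n. m \<ge> N \<Longrightarrow> norm (sum b {m..<n}) < \<epsilon>/2"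
    unfolding summable_Cauchy by blast
  show ?thesis
  proof (intro exI allI impI)
    fix m n \<rho> assume mN: "N \<le> m" and mn: "m \<le> n" and r: "\<rho> \<in> {0..1::real}"
    obtain d where n: "n = m + d" using mn le_Suc_ex by blast
    have r0: "0 \<le> \<rho>" and r1: "\<rho> \<le> 1" using r by auto
    have "norm (\<Sum>k\<in>{m..<n}. b k * of_real \<rho> ^ k) = norm (\<Sum>k\<in>{m..<n}. of_real \<rho> ^ k * b k)"
      by (simp add: mult.commute)
    also have "\<dots> = norm (of_real \<rho> ^ n * (\<Sum>i\<in>{m..<n}. b i)
           - (\<Sum>k\<in>{m..<n}. (of_real \<rho> ^ Suc k - of_real \<rho> ^ k) * (\<Sum>i\<in>{m..<Suc k}. b i)))"
      using sbp[of "\<lambda>k. of_real \<rho> ^ k" b m d] unfolding n by simp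
    also have "\<dots> \<le> norm (of_real \<rho> ^ n * (\<Sum>i\<in>{m..<n}. b i))
           + norm (\<Sum>k\<in>{m..<n}. (of_real \<rho> ^ Suc k - of_real \<rho> ^ k) * (\<Sum>i\<in>{m..<Suc k}. b i))"
      by (rule norm_triangle_ineq4)
    also have "\<dots> \<le> \<rho> ^ n * (\<epsilon>/2) + (\<Sum>k\<in>{m..<n}. (\<rho>^k - \<rho>^Suc k) * (\<epsilon>/2))"
    proof (intro add_mono)
      show "norm (of_real \<rho> ^ n * (\<Sum>i\<in>{m..<n}. b i)) \<le> \<rho> ^ n * (\<epsilon>/2)"
        unfolding norm_mult using N[OF mN, of n] r0
        by (intro mult_mono) (auto simp: norm_power)
      show "norm (\<Sum>k\<in>{m..<n}. (of_real \<rho> ^ Suc k - of_real \<rho> ^ k) * (\<Sum>i\<in>{m..<Suc k}. b i))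
            \<le> (\<Sum>k\<in>{m..<n}. (\<rho>^k - \<rho>^Suc k) * (\<epsilon>/2))"
      proof (rule sum_norm_le)
        fix k assume k: "k \<in> {m..<n}"
        have "norm ((of_real \<rho> ^ Suc k - of_real \<rho> ^ k) :: complex) = \<rho>^k - \<rho>^Suc k"
        proof -
          have "((of_real \<rho> ^ Suc k - of_real \<rho> ^ k) :: complex) = of_real (\<rho> ^ Suc k - \<rho> ^ k)" by simp
          moreover have "\<rho> ^ Suc k \<le> \<rho> ^ k" using r0 r1 by (simp add: mult_left_le_one_le)
          ultimately show ?thesis by (simp only: norm_of_real)
        qed
        moreover have "norm (\<Sum>i\<in>{m..<Suc k}. b i) \<le> \<epsilon>/2" using N[OF mN, of "Suc k"] by simp
        ultimately show "norm ((of_real \<rho> ^ Suc k - of_real \<rho> ^ k) * (\<Sum>i\<in>{m..<Suc k}. b i))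
            \<le> (\<rho>^k - \<rho>^Suc k) * (\<epsilon>/2)"
          unfolding norm_mult by (intro mult_mono) (auto simp: r0 r1 mult_left_le_one_le)
      qed
    qed
    also have "\<dots> = (\<epsilon>/2) * (\<rho>^n + (\<Sum>k\<in>{m..<n}. \<rho>^k - \<rho>^Suc k))"
      by (simp add: sum_distrib_left distrib_left mult.commute)
    also have "\<dots> = (\<epsilon>/2) * (\<rho>^n + (\<rho>^m - \<rho>^n))"
      using telescope_pow[of \<rho> m d] unfolding n by simp
    also have "\<dots> = (\<epsilon>/2) * \<rho>^m" by simp
    also have "\<dots> \<le> (\<epsilon>/2) * 1" using r0 r1 e by (intro mult_left_mono power_le_one) auto
    also have "\<dots> < \<epsilon>" using e by simp
    finally show "norm (\<Sum>k\<in>{m..<n}. b k * of_real \<rho> ^ k) < \<epsilon>" .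
  qed
qed

lemma abel_limit:
  fixes b :: "nat \<Rightarrow> complex"
  assumes sb: "summable b"
  shows "((\<lambda>\<rho>. \<Sum>n. b n * of_real \<rho> ^ n) \<longlongrightarrow> (\<Sum>n. b n)) (at_left 1)"
proof -
  have uc: "uniformly_convergent_on {0..1} (\<lambda>n \<rho>. \<Sum>k<n. b k * of_real \<rho> ^ k)"
    unfolding uniformly_convergent_on_sum_iff
    using abel_tail[OF sb] by blast
  then obtain l where ul: "uniform_limit {0..1} (\<lambda>n \<rho>. \<Sum>k<n. b k * of_real \<rho> ^ k) l sequentially"
    unfolding uniformly_convergent_on_def by blast
  have cl: "continuous_on {0..1} l"
    by (rule uniform_limit_theorem[OF _ ul]) (auto intro!: always_eventually continuous_intros)
  have lv: "l \<rho> = (\<Sum>n. b n * of_real \<rho> ^ n)" if "\<rho> \<in> {0..1}" for \<rho>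
  proof -
    have "(\<lambda>n. \<Sum>k<n. b k * of_real \<rho> ^ k) \<longlonglongrightarrow> l \<rho>"
      using tendsto_uniform_limitI[OF ul that] .
    then have "(\<lambda>k. b k * of_real \<rho> ^ k) sums l \<rho>" by (simp add: sums_def)
    then show ?thesis by (simp add: sums_iff)
  qed
  have lim1: "(l \<longlongrightarrow> l 1) (at 1 within {0..1})"
    using cl by (simp add: continuous_on_def)
  then have lim: "(l \<longlongrightarrow> l 1) (at_left 1)" by (simp add: at_within_Icc_at_left)
  have ev2: "\<forall>\<^sub>F \<rho> in at_left (1::real). (\<Sum>n. b n * of_real \<rho> ^ n) = l \<rho>"
  proof -
    have ev: "eventually (\<lambda>\<rho>. \<rho> \<in> {0<..<(1::real)}) (at_left 1)"
      by (rule eventually_at_left_real) simp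
    then show ?thesis by eventually_elim (auto simp: lv)
  qed
  have "((\<lambda>\<rho>. \<Sum>n. b n * of_real \<rho> ^ n) \<longlongrightarrow> l 1) (at_left 1)"
    using tendsto_cong[OF ev2] lim by simp
  moreover have "l 1 = (\<Sum>n. b n)" using lv[of 1] by simp
  ultimately show ?thesis by simp
qed


declare Hsum.simps[simp del]

lemma Hsum_Nil[simp]: "Hsum [] M = 1"
  by (subst Hsum.simps) simp

lemma Hsum_snoc[simp]: "Hsum (xs @ [x]) M = (\<Sum>m\<in>{1..<M}. Hsum xs m / of_nat m ^ x)"
  by (subst Hsum.simps) simp

definition hr :: "nat list \<Rightarrow> nat \<Rightarrow> real" where
  "hr k m = Re (Hsum k m)"

lemma Hsum_of_real: "Hsum k m = of_real (hr k m)"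
proof (induction k arbitrary: m rule: rev_induct)
  case Nil then show ?case by (simp add: hr_def)
next
  case (snoc x xs)
  have "Hsum (xs @ [x]) m = (\<Sum>i\<in>{1..<m}. of_real (hr xs i / real i ^ x))"
    using snoc by simp
  also have "\<dots> = of_real (\<Sum>i\<in>{1..<m}. hr xs i / real i ^ x)" by simp
  finally have eq: "Hsum (xs @ [x]) m = of_real (\<Sum>i\<in>{1..<m}. hr xs i / real i ^ x)" .
  show ?case unfolding hr_def eq by simp
qed

lemma hr_Nil[simp]: "hr [] m = 1" by (simp add: hr_def)

lemma hr_snoc: "hr (xs @ [x]) m = (\<Sum>i\<in>{1..<m}. hr xs i / real i ^ x)"
proof -
  have "Hsum (xs @ [x]) m = (\<Sum>i\<in>{1..<m}. of_real (hr xs i) / of_nat i ^ x)"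
    by (simp only: Hsum_snoc Hsum_of_real[of xs])
  also have "\<dots> = of_real (\<Sum>i\<in>{1..<m}. hr xs i / real i ^ x)" by simp
  finally have "Hsum (xs @ [x]) m = of_real (\<Sum>i\<in>{1..<m}. hr xs i / real i ^ x)" .
  then show ?thesis by (simp add: hr_def)
qed

lemma hr_nonneg: "hr k m \<ge> 0"
proof (induction k arbitrary: m rule: rev_induct)
  case Nil then show ?case by simp
next
  case (snoc x xs) then show ?case by (simp add: hr_snoc sum_nonneg)
qed

lemma hr_mono: "m \<le> m' \<Longrightarrow> hr k m \<le> hr k m'"
proof (cases k rule: rev_exhaust)
  case Nil then show ?thesis by simp
next
  case (snoc xs x)
  assume "m \<le> m'"
  then show ?thesis unfolding snoc hr_snoc
    by (intro sum_mono2) (auto intro!: divide_nonneg_nonneg hr_nonneg)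
qed

lemma sum_inv_le: "1 \<le> m \<Longrightarrow> (\<Sum>i\<in>{1..<m}. 1 / real i) \<le> 1 + ln (real m)"
proof (cases "m = 1")
  case True then show ?thesis by simp
next
  case False
  assume m1: "1 \<le> m"
  then have m2: "m - 1 \<ge> 1" using False by simp
  have "{1..<m} = {1..m-1}" using m1 by auto
  then have "(\<Sum>i\<in>{1..<m}. 1 / real i) = harm (m - 1)" by (simp add: harm_def divide_inverse)
  also have "\<dots> \<le> harm 1 - ln (real 1) + ln (real (m - 1))"
    using euler_mascheroni_sequence_decreasing[of 1 "m - 1"] m2 by simp
  also have "\<dots> \<le> 1 + ln (real m)" using m2 by (simp add: harm_def)
  finally show ?thesis .
qed

definition pos :: "nat list \<Rightarrow> bool" where "pos k = (\<forall>x\<in>set k. 1 \<le> x)"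

lemma pos_snoc[simp]: "pos (xs @ [x]) = (pos xs \<and> 1 \<le> x)"
  by (auto simp: pos_def)
lemma pos_Nil[simp]: "pos []" by (simp add: pos_def)

lemma hr_log_bound: "pos k \<Longrightarrow> 1 \<le> m \<Longrightarrow> hr k m \<le> (1 + ln (real m)) ^ length k"
proof (induction k arbitrary: m rule: rev_induct)
  case Nil then show ?case by simp
next
  case (snoc x xs)
  have x1: "1 \<le> x" and pxs: "pos xs" using snoc.prems by auto
  let ?B = "(1 + ln (real m)) ^ length xs"
  have "hr (xs @ [x]) m = (\<Sum>i\<in>{1..<m}. hr xs i / real i ^ x)" by (rule hr_snoc)
  also have "\<dots> \<le> (\<Sum>i\<in>{1..<m}. ?B * (1 / real i))"
  proof (rule sum_mono)
    fix i assume i: "i \<in> {1..<m}"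
    have i1: "1 \<le> i" using i by simp
    have "hr xs i \<le> (1 + ln (real i)) ^ length xs" using snoc.IH[OF pxs, of i] i1 by simp
    also have "\<dots> \<le> ?B" using i i1 by (intro power_mono) auto
    finally have h: "hr xs i \<le> ?B" .
    have "real i \<le> real i ^ x" using power_increasing[OF x1, of "real i"] i1 by simp
    then have "hr xs i / real i ^ x \<le> hr xs i / real i"
      using i1 by (intro divide_left_mono hr_nonneg) auto
    also have "\<dots> \<le> ?B / real i" using h i1 by (intro divide_right_mono) auto
    finally show "hr xs i / real i ^ x \<le> ?B * (1 / real i)" by simp
  qed
  also have "\<dots> = ?B * (\<Sum>i\<in>{1..<m}. 1 / real i)" by (simp add: sum_distrib_left)
  also have "\<dots> \<le> ?B * (1 + ln (real m))"
    using sum_inv_le[OF snoc.prems(2)] snoc.prems(2) by (intro mult_left_mono) auto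
  finally show ?case by (simp add: mult.commute)
qed

lemma log_pow_sqrt:
  assumes m: "1 \<le> (m::real)"
  shows "(1 + ln m) ^ d \<le> (1 + 2 * real d) ^ d * sqrt m"
proof (cases "d = 0")
  case True then show ?thesis using m by simp
next
  case False
  define y where "y = m powr (1 / (2 * real d))"
  have y1: "1 \<le> y" unfolding y_def using m False by (simp add: ge_one_powr_ge_zero)
  have "ln y = ln m / (2 * real d)" unfolding y_def using m by (simp add: ln_powr)
  moreover have "ln y \<le> y - 1" using y1 by (intro ln_le_minus_one) simp
  ultimately have "ln m = 2 * real d * ln y" using False by (simp add: field_simps)
  also have "\<dots> \<le> 2 * real d * (y - 1)" using \<open>ln y \<le> y - 1\<close> by (intro mult_left_mono) auto
  finally have "ln m \<le> 2 * real d * (y - 1)" .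
  then have "1 + ln m \<le> (1 + 2 * real d) * y" using y1 by (simp add: algebra_simps)
  moreover have "0 \<le> 1 + ln m" using m by simp
  ultimately have "(1 + ln m) ^ d \<le> ((1 + 2 * real d) * y) ^ d" by (intro power_mono) auto
  also have "\<dots> = (1 + 2 * real d) ^ d * y ^ d" by (simp add: power_mult_distrib)
  also have "y ^ d = sqrt m"
  proof -
    have "y ^ d = y powr real d" using y1 by (simp add: powr_realpow)
    also have "\<dots> = m powr (1/2)" unfolding y_def using False by (simp add: powr_powr)
    also have "\<dots> = sqrt m" using m by (simp add: powr_half_sqrt)
    finally show ?thesis .
  qed
  finally show ?thesis .
qed

definition Ck :: "nat list \<Rightarrow> real" where "Ck k = (1 + 2 * real (length k)) ^ length k"

lemma Ck_ge1: "1 \<le> Ck k" unfolding Ck_def by simp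

lemma hr_sqrt: "pos k \<Longrightarrow> 1 \<le> m \<Longrightarrow> hr k m \<le> Ck k * sqrt (real m)"
  using hr_log_bound[of k m] log_pow_sqrt[of "real m" "length k"] unfolding Ck_def by simp

definition coef :: "nat list \<Rightarrow> nat \<Rightarrow> nat \<Rightarrow> real" where
  "coef k s M = hr k (Suc M) / real (Suc M) ^ s"

lemma coef_nonneg: "coef k s M \<ge> 0" unfolding coef_def by (simp add: hr_nonneg)

lemma coef_le: assumes "pos k" "1 \<le> s" shows "coef k s M \<le> Ck k / sqrt (real (Suc M))"
proof -
  have x1: "1 \<le> real (Suc M)" by simp
  have "real (Suc M) \<le> real (Suc M) ^ s" using power_increasing[OF assms(2), of "real (Suc M)"] x1 by simp
  then have "coef k s M \<le> hr k (Suc M) / real (Suc M)" unfolding coef_def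
    by (intro divide_left_mono hr_nonneg) auto
  also have "\<dots> \<le> Ck k * sqrt (real (Suc M)) / real (Suc M)"
    using hr_sqrt[OF assms(1), of "Suc M"] by (intro divide_right_mono) auto
  also have "\<dots> = Ck k / sqrt (real (Suc M))"
  proof -
    define y where "y = real (Suc M)"
    have y0: "0 < y" unfolding y_def by simp
    have "Ck k * sqrt y / y = Ck k * (sqrt y / y)" by simp
    also have "sqrt y / y = 1 / sqrt y" using y0 by (simp add: field_simps)
    finally show ?thesis unfolding y_def by simp
  qed
  finally show ?thesis .
qed

lemma coef_bounded: assumes "pos k" "1 \<le> s" shows "coef k s M \<le> Ck k"
proof -
  have "Ck k / sqrt (real (Suc M)) \<le> Ck k / 1"
    using Ck_ge1[of k] by (intro divide_left_mono) auto
  then show ?thesis using coef_le[OF assms, of M] by simp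
qed

lemma coef_lim: assumes "pos k" "1 \<le> s" shows "coef k s \<longlonglongrightarrow> 0"
proof (rule tendsto_sandwich[of "\<lambda>_. 0" _ _ "\<lambda>M. Ck k / sqrt (real (Suc M))"])
  show "\<forall>\<^sub>F n in sequentially. 0 \<le> coef k s n" by (simp add: coef_nonneg)
  show "\<forall>\<^sub>F n in sequentially. coef k s n \<le> Ck k / sqrt (real (Suc n))"
    using coef_le[OF assms] by simp
  have "filterlim (\<lambda>M. sqrt (real (Suc M))) at_top sequentially"
    by (rule filterlim_compose[OF sqrt_at_top filterlim_compose[OF filterlim_real_sequentially filterlim_Suc]])
  then have "(\<lambda>M. inverse (sqrt (real (Suc M)))) \<longlonglongrightarrow> 0" by (rule tendsto_inverse_0_at_top)
  then have "(\<lambda>M. 1 / sqrt (real (Suc M))) \<longlonglongrightarrow> 0" by (simp add: inverse_eq_divide)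
  then have "(\<lambda>M. Ck k * (1 / sqrt (real (Suc M)))) \<longlonglongrightarrow> Ck k * 0" by (intro tendsto_intros)
  then show "(\<lambda>M. Ck k / sqrt (real (Suc M))) \<longlonglongrightarrow> 0" by simp
qed simp



lemma inv_diff_le:
  assumes x: "1 \<le> (x::real)"
  shows "1 / x - 1 / (x + 1) \<le> 1 / x^2"
proof -
  have "1 / x - 1 / (x + 1) = 1 / (x * (x + 1))" using x by (simp add: field_simps)
  also have "\<dots> \<le> 1 / (x * x)"
  proof (rule divide_left_mono)
    show "x * x \<le> x * (x + 1)" using x by simp
    show "0 < x * (x + 1) * (x * x)" using x by simp
  qed simp
  finally show ?thesis by (simp add: power2_eq_square)
qed

lemma inv_pow_diff:
  assumes x: "1 \<le> (x::real)" and s: "1 \<le> s"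
  shows "1 / x ^ s - 1 / (x + 1) ^ s \<le> real s / x^2"
  using s
proof (induction s rule: dec_induct)
  case base
  have "1 / x - 1 / (x + 1) = 1 / (x * (x + 1))" using x by (simp add: field_simps)
  also have "\<dots> \<le> 1 / (x * x)"
  proof (rule divide_left_mono)
    show "x * x \<le> x * (x + 1)" using x by simp
    show "0 < x * (x + 1) * (x * x)" using x by simp
  qed simp
  finally show ?case by (simp add: power2_eq_square)
next
  case (step s)
  have xs: "0 < x ^ s" "0 < (x+1)^s" using x by auto
  have r: "\<And>a b c d :: real. a * c - b * d = a * (c - d) + (a - b) * d" by (simp add: algebra_simps)
  have "1 / x ^ Suc s - 1 / (x + 1) ^ Suc s = (1/x) * (1 / x ^ s) - (1/(x+1)) * (1/(x+1)^s)" by simp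
  also have "\<dots> = (1/x) * (1 / x ^ s - 1 / (x + 1) ^ s) + (1/x - 1/(x+1)) * (1 / (x+1)^s)" by (rule r)
  finally have "1 / x ^ Suc s - 1 / (x + 1) ^ Suc s
      = (1/x) * (1 / x ^ s - 1 / (x + 1) ^ s) + (1/x - 1/(x+1)) * (1 / (x+1)^s)" .
  also have "\<dots> \<le> (1/x) * (real s / x^2) + (1 / x^2) * 1"
  proof (intro add_mono mult_mono)
    show "1 / x ^ s - 1 / (x + 1) ^ s \<le> real s / x\<^sup>2" by (rule step.IH)
    show "1 / x - 1 / (x + 1) \<le> 1 / x^2" by (rule inv_diff_le[OF x])
    show "1 / (x + 1) ^ s \<le> 1" using x by simp
    show "0 \<le> 1 / x^2" by simp
    show "0 \<le> 1 / (x + 1) ^ s" using x by simp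
    show "0 \<le> 1 / x ^ s - 1 / (x + 1) ^ s"
    proof -
      have "x^s \<le> (x+1)^s" using x by (intro power_mono) auto
      then have "1/(x+1)^s \<le> 1/x^s" using xs by (intro divide_left_mono) auto
      then show ?thesis by simp
    qed
  qed (use x in auto)
  also have "\<dots> \<le> real s / x^2 + 1 / x^2"
  proof -
    have "(1/x) * (real s / x^2) \<le> 1 * (real s / x^2)" using x by (intro mult_right_mono) auto
    then show ?thesis by simp
  qed
  also have "\<dots> = real (Suc s) / x^2" by (simp add: add_divide_distrib)
  finally show ?case .
qed

lemma hr_incr:
  assumes "pos k"
  shows "hr k (Suc (Suc M)) - hr k (Suc M) \<le> Ck (butlast k) * sqrt (real (Suc M)) / real (Suc M)"
proof (cases k rule: rev_exhaust)
  case Nil then show ?thesis using Ck_ge1[of "[]"] by simp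
next
  case (snoc xs x)
  have x1: "1 \<le> x" and pxs: "pos xs" using assms snoc by auto
  have "hr k (Suc (Suc M)) - hr k (Suc M) = hr xs (Suc M) / real (Suc M) ^ x"
    unfolding snoc hr_snoc by (subst sum.atLeastLessThan_Suc) auto
  also have "\<dots> \<le> hr xs (Suc M) / real (Suc M)"
  proof -
    have "real (Suc M) \<le> real (Suc M) ^ x" using power_increasing[OF x1, of "real (Suc M)"] by simp
    then show ?thesis by (intro divide_left_mono hr_nonneg) auto
  qed
  also have "\<dots> \<le> Ck xs * sqrt (real (Suc M)) / real (Suc M)"
    using hr_sqrt[OF pxs, of "Suc M"] by (intro divide_right_mono) auto
  finally show ?thesis unfolding snoc by simp
qed

lemma summable_sqrt_sq: "summable (\<lambda>M. sqrt (real (Suc M)) / real (Suc M) ^ 2)"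
proof -
  have "summable (\<lambda>n. real n powr (-3/2))" by (simp add: summable_real_powr_iff)
  then have "summable (\<lambda>M. real (Suc M) powr (-3/2))" by (subst summable_Suc_iff)
  moreover have "real (Suc M) powr (-3/2) = sqrt (real (Suc M)) / real (Suc M) ^ 2" for M
  proof -
    define y where "y = real (Suc M)"
    have y0: "0 < y" unfolding y_def by simp
    have e1: "y powr (-3/2) = y powr (1/2 - 2)" by simp
    have e2: "y powr (1/2 - 2) = y powr (1/2) / y powr 2" by (rule powr_diff)
    have e3: "y powr 2 = y ^ 2" using powr_realpow[OF y0, of 2] by simp
    have e4: "y powr (1/2) = sqrt y" using y0 by (simp add: powr_half_sqrt)
    show ?thesis using e1 e2 e3 e4 unfolding y_def by simp
  qed
  ultimately show ?thesis by simp
qed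

lemma coef_bv:
  assumes pk: "pos k" and s: "1 \<le> s"
  shows "summable (\<lambda>M. \<bar>coef k s (Suc M) - coef k s M\<bar>)"
proof (rule summable_comparison_test[OF _ summable_mult[OF summable_sqrt_sq, of "Ck (butlast k) + Ck k * real s"]])
  show "\<exists>N. \<forall>M\<ge>N. norm \<bar>coef k s (Suc M) - coef k s M\<bar>
          \<le> (Ck (butlast k) + Ck k * real s) * (sqrt (real (Suc M)) / real (Suc M) ^ 2)"
  proof (intro exI allI impI)
    fix M :: nat
    define x where "x = real (Suc M)"
    have x1: "1 \<le> x" unfolding x_def by simp
    have sx: "real (Suc (Suc M)) = x + 1" unfolding x_def by simp
    define A where "A = (hr k (Suc (Suc M)) - hr k (Suc M)) / (x+1)^s"
    define B where "B = hr k (Suc M) * (1 / x^s - 1/(x+1)^s)"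
    have eq: "coef k s (Suc M) - coef k s M = A - B"
      unfolding coef_def A_def B_def sx x_def[symmetric] by (simp add: diff_divide_distrib right_diff_distrib)
    have A0: "0 \<le> A" unfolding A_def using hr_mono[of "Suc M" "Suc (Suc M)" k] x1 by simp
    have B0: "0 \<le> B" unfolding B_def using x1 hr_nonneg[of k "Suc M"]
      by (intro mult_nonneg_nonneg) (auto simp: field_simps intro!: power_mono)
    have "x + 1 \<le> (x+1)^s" using power_increasing[OF s, of "x+1"] x1 by simp
    then have "A \<le> (hr k (Suc (Suc M)) - hr k (Suc M)) / (x + 1)"
      unfolding A_def using hr_mono[of "Suc M" "Suc (Suc M)" k] x1
      by (intro divide_left_mono) auto
    also have "\<dots> \<le> (Ck (butlast k) * sqrt x / x) / (x + 1)"
      using hr_incr[OF pk, of M] x1 unfolding x_def by (intro divide_right_mono) auto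
    also have "\<dots> \<le> (Ck (butlast k) * sqrt x / x) / x"
      using x1 Ck_ge1[of "butlast k"] by (intro divide_left_mono) auto
    also have "\<dots> = Ck (butlast k) * (sqrt x / x^2)" by (simp add: power2_eq_square)
    finally have Ab: "A \<le> Ck (butlast k) * (sqrt x / x^2)" .
    have D0: "0 \<le> 1 / x^s - 1/(x+1)^s"
    proof -
      have "x^s \<le> (x+1)^s" using x1 by (intro power_mono) auto
      then have "1/(x+1)^s \<le> 1/x^s" using x1 by (intro divide_left_mono) auto
      then show ?thesis by simp
    qed
    have hb: "hr k (Suc M) \<le> Ck k * sqrt x" using hr_sqrt[OF pk, of "Suc M"] unfolding x_def by simp
    have c0: "0 \<le> Ck k * sqrt x" using Ck_ge1[of k] x1 by simp
    have "B \<le> (Ck k * sqrt x) * (real s / x^2)"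
      unfolding B_def by (rule mult_mono[OF hb inv_pow_diff[OF x1 s] c0 D0])
    then have Bb: "B \<le> Ck k * real s * (sqrt x / x^2)" by (simp add: mult_ac)
    have "norm \<bar>coef k s (Suc M) - coef k s M\<bar> = \<bar>A - B\<bar>" using eq by simp
    also have "\<dots> \<le> A + B" using A0 B0 by simp
    also have "\<dots> \<le> (Ck (butlast k) + Ck k * real s) * (sqrt x / x^2)"
      using Ab Bb by (simp add: algebra_simps)
    finally show "norm \<bar>coef k s (Suc M) - coef k s M\<bar>
          \<le> (Ck (butlast k) + Ck k * real s) * (sqrt (real (Suc M)) / real (Suc M) ^ 2)"
      unfolding x_def .
  qed
qed


definition ac :: "nat list \<Rightarrow> nat \<Rightarrow> nat \<Rightarrow> complex" where
  "ac k s M = complex_of_real (coef k s M)"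

lemma Li_snoc: "Li (k @ [s]) z = (\<Sum>M. z ^ Suc M * ac k s M)"
  unfolding Li_def ac_def coef_def by (simp add: Hsum_of_real)

lemma ac_bv: "pos k \<Longrightarrow> 1 \<le> s \<Longrightarrow> summable (\<lambda>M. norm (ac k s (Suc M) - ac k s M))"
proof -
  assume a: "pos k" "1 \<le> s"
  have "norm (ac k s (Suc M) - ac k s M) = \<bar>coef k s (Suc M) - coef k s M\<bar>" for M
    unfolding ac_def by (metis norm_of_real of_real_diff)
  then show ?thesis using coef_bv[OF a] by simp
qed

lemma ac_lim: "pos k \<Longrightarrow> 1 \<le> s \<Longrightarrow> ac k s \<longlonglongrightarrow> 0"
  unfolding ac_def using tendsto_of_real[OF coef_lim] by fastforce

lemma Li_summable0:
  assumes "pos k" "1 \<le> s" "norm z \<le> 1" "z \<noteq> 1"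
  shows "summable (\<lambda>M. ac k s M * z ^ M)"
  unfolding summable_Cauchy
proof (intro allI impI)
  fix e :: real assume e: "0 < e"
  have d: "0 < norm (1 - z)" using assms(4) by simp
  from dirichlet_tail[OF ac_bv[OF assms(1,2)] ac_lim[OF assms(1,2)] d e] obtain N where
    N: "\<And>m n w. N \<le> m \<Longrightarrow> m \<le> n \<Longrightarrow> norm w \<le> 1 \<Longrightarrow> norm (1 - z) \<le> norm (1 - w)
        \<Longrightarrow> norm (\<Sum>j\<in>{m..<n}. ac k s j * w ^ j) < e" by blast
  show "\<exists>N. \<forall>m\<ge>N. \<forall>n. norm (\<Sum>j = m..<n. ac k s j * z ^ j) < e"
  proof (intro exI allI impI)
    fix m n assume "N \<le> m"
    show "norm (\<Sum>j = m..<n. ac k s j * z ^ j) < e"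
    proof (cases "m \<le> n")
      case True then show ?thesis using N[OF \<open>N \<le> m\<close> True assms(3)] by simp
    next
      case False then show ?thesis using e by simp
    qed
  qed
qed

lemma Li_summable:
  assumes "pos k" "1 \<le> s" "norm z \<le> 1" "z \<noteq> 1"
  shows "summable (\<lambda>M. z ^ Suc M * ac k s M)"
proof -
  have "summable (\<lambda>M. z * (ac k s M * z ^ M))" by (rule summable_mult[OF Li_summable0[OF assms]])
  then show ?thesis by (simp add: mult_ac)
qed

lemma Li_eq_mult: 
  assumes "pos k" "1 \<le> s" "norm z \<le> 1" "z \<noteq> 1"
  shows "Li (k @ [s]) z = z * (\<Sum>M. ac k s M * z ^ M)"
proof -
  have "z * (\<Sum>M. ac k s M * z ^ M) = (\<Sum>M. z * (ac k s M * z ^ M))"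
    by (rule suminf_mult[OF Li_summable0[OF assms], symmetric])
  then show ?thesis unfolding Li_snoc by (simp add: mult_ac)
qed

lemma vderiv_series:
  fixes f d :: "nat \<Rightarrow> real \<Rightarrow> complex"
  assumes ab: "lo < x" "x < hi"
    and fd: "\<And>n t. t \<in> {lo..hi} \<Longrightarrow> (f n has_vector_derivative d n t) (at t)"
    and uc: "uniformly_convergent_on {lo..hi} (\<lambda>n t. \<Sum>i<n. d i t)"
    and sm: "summable (\<lambda>n. f n x)"
  shows "((\<lambda>t. \<Sum>n. f n t) has_vector_derivative (\<Sum>n. d n x)) (at x)"
proof -
  obtain G where ul: "uniform_limit {lo..hi} (\<lambda>n t. \<Sum>i<n. d i t) G sequentially"
    using uc unfolding uniformly_convergent_on_def by blast
  have xS: "x \<in> {lo..hi}" using ab by simp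
  have "\<exists>g. \<forall>t\<in>{lo..hi}. (\<lambda>n. f n t) sums g t \<and> (g has_derivative (\<lambda>h. h *\<^sub>R G t)) (at t within {lo..hi})"
  proof (rule has_derivative_series[where f' = "\<lambda>n t h. h *\<^sub>R d n t"])
    show "convex {lo..hi}" by simp
    show "(f n has_derivative (\<lambda>h. h *\<^sub>R d n t)) (at t within {lo..hi})" if "t \<in> {lo..hi}" for n t
      using fd[OF that, of n] unfolding has_vector_derivative_def by (rule has_derivative_at_withinI)
    show "\<forall>\<^sub>F n in sequentially. \<forall>t\<in>{lo..hi}. \<forall>h. norm ((\<Sum>i<n. h *\<^sub>R d i t) - h *\<^sub>R G t) \<le> e * norm h"
      if e: "e > 0" for e
    proof -
      from ul e have "\<forall>\<^sub>F n in sequentially. \<forall>t\<in>{lo..hi}. dist (\<Sum>i<n. d i t) (G t) < e"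
        unfolding uniform_limit_iff by blast
      then show ?thesis
      proof eventually_elim
        case (elim n)
        show ?case
        proof (intro ballI allI)
          fix t h assume t: "t \<in> {lo..hi}"
          have eqn: "norm ((\<Sum>i<n. h *\<^sub>R d i t) - h *\<^sub>R G t) = \<bar>h\<bar> * norm ((\<Sum>i<n. d i t) - G t)"
            by (simp add: scaleR_sum_right[symmetric] scaleR_diff_right[symmetric])
          have "norm ((\<Sum>i<n. d i t) - G t) < e" using elim t by (auto simp: dist_norm)
          then have "\<bar>h\<bar> * norm ((\<Sum>i<n. d i t) - G t) \<le> \<bar>h\<bar> * e" by (intro mult_left_mono) auto
          then show "norm ((\<Sum>i<n. h *\<^sub>R d i t) - h *\<^sub>R G t) \<le> e * norm h" using eqn by (simp add: mult.commute)
        qed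
      qed
    qed
    show "x \<in> {lo..hi}" by (rule xS)
    show "(\<lambda>n. f n x) sums (\<Sum>n. f n x)" using sm by (simp add: summable_sums)
  qed
  then obtain g where g: "\<And>t. t \<in> {lo..hi} \<Longrightarrow> (\<lambda>n. f n t) sums g t"
    "\<And>t. t \<in> {lo..hi} \<Longrightarrow> (g has_derivative (\<lambda>h. h *\<^sub>R G t)) (at t within {lo..hi})" by blast
  have at: "at x within {lo..hi} = at x" using ab by (rule at_within_Icc_at)
  have gd: "(g has_vector_derivative G x) (at x)"
    using g(2)[OF xS] unfolding at has_vector_derivative_def .
  have Gx: "G x = (\<Sum>n. d n x)"
  proof -
    have "(\<lambda>n. \<Sum>i<n. d i x) \<longlonglongrightarrow> G x" using tendsto_uniform_limitI[OF ul xS] .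
    then have "(\<lambda>i. d i x) sums G x" by (simp add: sums_def)
    then show ?thesis by (simp add: sums_iff)
  qed
  show ?thesis
  proof (rule has_vector_derivative_transform_within_open[OF gd[unfolded Gx]])
    show "open {lo<..<hi}" by simp
    show "x \<in> {lo<..<hi}" using ab by simp
    show "g y = (\<Sum>n. f n y)" if "y \<in> {lo<..<hi}" for y
      using g(1)[of y] that by (simp add: sums_iff)
  qed
qed

lemma exp_circle_ne1:
  assumes "0 < t" "t < 2 * pi"
  shows "exp (\<i> * complex_of_real t) \<noteq> 1"
proof
  assume "exp (\<i> * complex_of_real t) = 1"
  then obtain n :: int where n: "t = of_int (2 * n) * pi" unfolding exp_eq_1 by auto
  have "0 < of_int (2 * n) * pi" using assms n by simp
  then have "0 < n" by (simp add: zero_less_mult_iff)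
  moreover have "of_int (2 * n) * pi < 2 * pi" using assms n by simp
  then have "n < 1" by simp
  ultimately show False by simp
qed

lemma exp_pow_deriv:
  "((\<lambda>t. exp (\<i> * complex_of_real t) ^ n) has_vector_derivative
      (\<i> * of_nat n * exp (\<i> * complex_of_real \<sigma>) ^ n)) (at \<sigma>)"
proof -
  have "((\<lambda>w. exp (\<i> * w) ^ n) has_field_derivative (\<i> * of_nat n * exp (\<i> * w) ^ n)) (at w)" for w
  proof (cases n)
    case 0 then show ?thesis by (auto intro!: derivative_eq_intros)
  next
    case (Suc m)
    have d1: "((\<lambda>w. exp (\<i> * w) ^ n) has_field_derivative (of_nat n * exp (\<i> * w) ^ (n - 1) * (exp (\<i> * w) * (\<i>)))) (at w)"
      by (auto intro!: derivative_eq_intros simp: mult_ac)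
    have eq: "of_nat n * exp (\<i> * w) ^ (n - 1) * (exp (\<i> * w) * (\<i>)) = \<i> * of_nat n * exp (\<i> * w) ^ n"
      unfolding Suc by (simp add: mult_ac)
    show ?thesis using d1 unfolding eq .
  qed
  from has_vector_derivative_real_field[OF this, of "of_real \<sigma>" UNIV] show ?thesis by simp
qed

lemma Li_deriv_circle:
  assumes pk: "pos k" and s: "1 \<le> s" and \<sigma>: "0 < \<sigma>" "\<sigma> < 2 * pi"
  shows "((\<lambda>t. Li (k @ [Suc s]) (exp (\<i> * complex_of_real t))) has_vector_derivative
           (\<i> * Li (k @ [s]) (exp (\<i> * complex_of_real \<sigma>)))) (at \<sigma>)"
proof -
  define a where "a = min \<sigma> (2 * pi - \<sigma>) / 2"
  have a0: "0 < a" unfolding a_def using \<sigma> by simp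
  define lo where "lo = \<sigma> - a"
  define hi where "hi = \<sigma> + a"
  have lo: "0 < lo" "lo < \<sigma>" unfolding lo_def a_def using \<sigma> by auto
  have "min \<sigma> (2 * pi - \<sigma>) \<le> 2 * pi - \<sigma>" by simp
  have aa: "2 * a \<le> 2 * pi - \<sigma>" unfolding a_def by simp
  have hi1: "hi < 2 * pi" unfolding hi_def using \<sigma> aa a0 by linarith
  have hi2: "\<sigma> < hi" unfolding hi_def using a0 by linarith
  note hi = hi1 hi2
  define E where "E t = exp (\<i> * complex_of_real t)" for t
  define K where "K = E ` {lo..hi}"
  have "compact K" unfolding K_def E_def
    by (intro compact_continuous_image continuous_intros) simp
  then have cK: "closed K" by (rule compact_imp_closed)
  have nK: "1 \<notin> K"
  proof
    assume "1 \<in> K"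
    then obtain t where t: "t \<in> {lo..hi}" "E t = 1" unfolding K_def by auto
    then have "0 < t" "t < 2 * pi" using lo hi by auto
    from exp_circle_ne1[OF this] t show False unfolding E_def by simp
  qed
  obtain \<delta> where \<delta>: "\<delta> > 0" "\<And>z. z \<in> K \<Longrightarrow> \<delta> \<le> dist 1 z"
    using separate_point_closed[OF cK nK] by blast
  have Enorm: "norm (E t) = 1" for t unfolding E_def by simp
  have Ed: "\<delta> \<le> norm (1 - E t)" if "t \<in> {lo..hi}" for t
    using \<delta>(2)[of "E t"] that unfolding K_def by (auto simp: dist_norm)
  define f where "f n t = E t ^ Suc n * ac k (Suc s) n" for n t
  define d where "d n t = \<i> * E t ^ Suc n * ac k s n" for n t
  have fd: "(f n has_vector_derivative d n t) (at t)" for n t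
  proof -
    have d1: "((\<lambda>t. E t ^ Suc n * ac k (Suc s) n) has_vector_derivative
           (\<i> * of_nat (Suc n) * E t ^ Suc n * ac k (Suc s) n)) (at t)"
      unfolding E_def by (intro has_vector_derivative_mult_left exp_pow_deriv)
    have eq: "of_nat (Suc n) * ac k (Suc s) n = ac k s n"
      unfolding ac_def coef_def by (simp add: field_simps del: of_nat_Suc)
    have "\<i> * of_nat (Suc n) * E t ^ Suc n * ac k (Suc s) n = \<i> * E t ^ Suc n * (of_nat (Suc n) * ac k (Suc s) n)"
      by (simp only: mult_ac)
    also have "\<dots> = d n t" unfolding eq d_def ..
    finally show ?thesis using d1 unfolding f_def by simp
  qed
  have uc: "uniformly_convergent_on {lo..hi} (\<lambda>n t. \<Sum>i<n. d i t)"
    unfolding uniformly_convergent_on_sum_iff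
  proof (intro allI impI)
    fix e :: real assume e: "0 < e"
    from dirichlet_tail[OF ac_bv[OF pk s] ac_lim[OF pk s] \<delta>(1) e] obtain N where
      N: "\<And>m n w. N \<le> m \<Longrightarrow> m \<le> n \<Longrightarrow> norm w \<le> 1 \<Longrightarrow> \<delta> \<le> norm (1 - w)
        \<Longrightarrow> norm (\<Sum>j\<in>{m..<n}. ac k s j * w ^ j) < e" by blast
    show "\<exists>N. \<forall>m n t. N \<le> m \<longrightarrow> m \<le> n \<longrightarrow> t \<in> {lo..hi} \<longrightarrow> norm (\<Sum>k = m..<n. d k t) < e"
    proof (intro exI allI impI)
      fix m n t assume mn: "N \<le> m" "m \<le> n" and t: "t \<in> {lo..hi}"
      have "(\<Sum>k = m..<n. d k t) = \<i> * E t * (\<Sum>j = m..<n. ac k s j * E t ^ j)"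
        unfolding d_def by (simp add: sum_distrib_left mult_ac)
      then have "norm (\<Sum>k = m..<n. d k t) = norm (\<Sum>j = m..<n. ac k s j * E t ^ j)"
        by (simp add: norm_mult Enorm)
      also have "\<dots> < e" using N[OF mn, of "E t"] Enorm[of t] Ed[OF t] by simp
      finally show "norm (\<Sum>k = m..<n. d k t) < e" .
    qed
  qed
  have sm: "summable (\<lambda>n. f n \<sigma>)"
    unfolding f_def using Li_summable[OF pk _ _ exp_circle_ne1[OF \<sigma>], of "Suc s"] s Enorm[of \<sigma>]
    by (simp add: E_def)
  have "((\<lambda>t. \<Sum>n. f n t) has_vector_derivative (\<Sum>n. d n \<sigma>)) (at \<sigma>)"
    by (rule vderiv_series[OF lo(2) hi(2) fd uc sm])
  moreover have "(\<lambda>t. \<Sum>n. f n t) = (\<lambda>t. Li (k @ [Suc s]) (exp (\<i> * complex_of_real t)))"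
    unfolding f_def Li_snoc E_def by simp
  moreover have "(\<Sum>n. d n \<sigma>) = \<i> * Li (k @ [s]) (exp (\<i> * complex_of_real \<sigma>))"
  proof -
    have smd: "summable (\<lambda>n. E \<sigma> ^ Suc n * ac k s n)"
      using Li_summable[OF pk s _ exp_circle_ne1[OF \<sigma>]] Enorm[of \<sigma>] by (simp add: E_def)
    have "(\<Sum>n. d n \<sigma>) = (\<Sum>n. \<i> * (E \<sigma> ^ Suc n * ac k s n))" unfolding d_def by (simp add: mult_ac)
    also have "\<dots> = \<i> * (\<Sum>n. E \<sigma> ^ Suc n * ac k s n)" by (rule suminf_mult[OF smd])
    finally show ?thesis unfolding Li_snoc E_def by simp
  qed
  ultimately show ?thesis by simp
qed


definition pc :: "nat list \<Rightarrow> nat \<Rightarrow> nat \<Rightarrow> complex" where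
  "pc k s n = (if n = 0 then 0 else ac k s (n - 1))"

lemma suminf_shift0: "f 0 = (0::complex) \<Longrightarrow> (\<Sum>n. f (Suc n)) = (\<Sum>n. f n)"
proof -
  assume f0: "f 0 = 0"
  have "((sums) (\<lambda>n. f (Suc n))) = ((sums) f)" using sums_Suc_iff[of f] f0 by (simp add: fun_eq_iff)
  then show ?thesis by (simp add: suminf_def)
qed

lemma Li_powser: "Li (k @ [s]) z = (\<Sum>n. pc k s n * z ^ n)"
proof -
  have "Li (k @ [s]) z = (\<Sum>n. pc k s (Suc n) * z ^ Suc n)"
    unfolding Li_snoc pc_def by (simp add: mult_ac)
  also have "\<dots> = (\<Sum>n. pc k s n * z ^ n)"
    by (rule suminf_shift0[of "\<lambda>n. pc k s n * z ^ n"]) (simp add: pc_def)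
  finally show ?thesis .
qed

lemma pc_bound: "pos k \<Longrightarrow> 1 \<le> s \<Longrightarrow> norm (pc k s n) \<le> Ck k"
  unfolding pc_def ac_def using coef_bounded[of k s] coef_nonneg[of k s] Ck_ge1[of k]
  by auto

lemma pc_summable:
  assumes "pos k" "1 \<le> s" "norm z < 1"
  shows "summable (\<lambda>n. norm (pc k s n * z ^ n))"
proof (rule summable_comparison_test)
  show "summable (\<lambda>n. Ck k * norm z ^ n)"
    using assms(3) by (intro summable_mult summable_geometric) simp
  show "\<exists>N. \<forall>n\<ge>N. norm (norm (pc k s n * z ^ n)) \<le> Ck k * norm z ^ n"
    using pc_bound[OF assms(1,2)] by (auto simp: norm_mult norm_power intro!: mult_right_mono)
qed

lemma ac_Suc: "of_nat (Suc n) * ac k (Suc s) n = ac k s n"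
  unfolding ac_def coef_def by (simp add: field_simps del: of_nat_Suc)

lemma Li_deriv_disk_general:
  assumes "pos k" "1 \<le> s" "norm z < 1"
  shows "(Li (k @ [s]) has_field_derivative (\<Sum>n. diffs (pc k s) n * z ^ n)) (at z)"
proof -
  have "((\<lambda>z. \<Sum>n. pc k s n * z ^ n) has_field_derivative (\<Sum>n. diffs (pc k s) n * z ^ n)) (at z)"
  proof (rule termdiffs_strong'[of 1])
    show "summable (\<lambda>n. pc k s n * w ^ n)" if "norm w < 1" for w
      using pc_summable[OF assms(1,2) that] by (rule summable_norm_cancel)
  qed (use assms in auto)
  moreover have "(\<lambda>z. \<Sum>n. pc k s n * z ^ n) = Li (k @ [s])" by (simp add: fun_eq_iff Li_powser)
  ultimately show ?thesis by simp
qed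

lemma Li_differentiable_disk:
  "pos k \<Longrightarrow> 1 \<le> s \<Longrightarrow> norm z < 1 \<Longrightarrow> Li (k @ [s]) field_differentiable (at z)"
  using Li_deriv_disk_general field_differentiable_def by blast

lemma Li_deriv_disk_e0:
  assumes "pos k" "1 \<le> s" "norm z < 1" "z \<noteq> 0"
  shows "(Li (k @ [Suc s]) has_field_derivative Li (k @ [s]) z / z) (at z)"
proof -
  have d: "(Li (k @ [Suc s]) has_field_derivative (\<Sum>n. diffs (pc k (Suc s)) n * z ^ n)) (at z)"
    using Li_deriv_disk_general[of k "Suc s" z] assms by simp
  have "diffs (pc k (Suc s)) n = ac k s n" for n
    unfolding diffs_def pc_def by (simp add: ac_Suc del: of_nat_Suc)
  then have "(\<Sum>n. diffs (pc k (Suc s)) n * z ^ n) = (\<Sum>n. ac k s n * z ^ n)" by simp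
  also have "\<dots> = Li (k @ [s]) z / z"
  proof -
    have z1: "z \<noteq> 1" using assms(3) by auto
    have e: "Li (k @ [s]) z = z * (\<Sum>n. ac k s n * z ^ n)"
      using Li_eq_mult[OF assms(1,2) _ z1] assms(3) by simp
    show ?thesis unfolding e using assms(4) by simp
  qed
  finally show ?thesis using d by simp
qed

lemma hr_Suc_sum: "pos (k @ [x]) \<Longrightarrow> complex_of_real (hr (k @ [x]) (Suc n)) = (\<Sum>i\<le>n. pc k x i)"
proof -
  have "(\<Sum>i\<le>n. pc k x i) = (\<Sum>i\<in>{1..n}. pc k x i)"
  proof -
    have "{..n} = insert 0 {1..n}" by auto
    then show ?thesis by (simp add: pc_def)
  qed
  also have "\<dots> = (\<Sum>i\<in>{1..n}. of_real (hr k i / real i ^ x))"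
    by (intro sum.cong refl) (auto simp: pc_def ac_def coef_def)
  also have "\<dots> = of_real (\<Sum>i\<in>{1..<Suc n}. hr k i / real i ^ x)"
    by (simp add: atLeastLessThanSuc_atLeastAtMost)
  finally show ?thesis by (simp add: hr_snoc)
qed

lemma Li_deriv_disk_e1:
  assumes pk: "pos k" and z: "norm z < 1"
  shows "(Li (k @ [1]) has_field_derivative Li k z / (1 - z)) (at z)"
proof -
  have d: "(Li (k @ [1]) has_field_derivative (\<Sum>n. diffs (pc k 1) n * z ^ n)) (at z)"
    using Li_deriv_disk_general[of k 1 z] assms by simp
  have dv: "diffs (pc k 1) n = of_real (hr k (Suc n))" for n
    unfolding diffs_def pc_def ac_def coef_def by (simp del: of_nat_Suc)
  have z1: "z \<noteq> 1" using z by auto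
  have "(\<Sum>n. of_real (hr k (Suc n)) * z ^ n) = Li k z / (1 - z)"
  proof (cases k rule: rev_exhaust)
    case Nil
    have "(\<Sum>n. z ^ n) = 1 / (1 - z)" using suminf_geometric[of z] z by simp
    then show ?thesis using Nil by (simp add: Li_def)
  next
    case (snoc k' x)
    have pk': "pos k'" "1 \<le> x" using pk snoc by auto
    have s1: "summable (\<lambda>n. norm (pc k' x n * z ^ n))" by (rule pc_summable[OF pk' z])
    have s2: "summable (\<lambda>n. norm (z ^ n))" using z by (simp add: norm_power summable_geometric)
    have "Li k z * (\<Sum>n. z ^ n) = (\<Sum>n. pc k' x n * z ^ n) * (\<Sum>n. z ^ n)"
      unfolding snoc Li_powser ..
    also have "\<dots> = (\<Sum>n. \<Sum>i\<le>n. pc k' x i * z ^ i * z ^ (n - i))"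
      by (rule Cauchy_product[OF s1 s2])
    also have "\<dots> = (\<Sum>n. of_real (hr k (Suc n)) * z ^ n)"
    proof (intro suminf_cong)
      fix n
      have "(\<Sum>i\<le>n. pc k' x i * z ^ i * z ^ (n - i)) = (\<Sum>i\<le>n. pc k' x i * z ^ n)"
        by (intro sum.cong refl) (simp add: mult.assoc power_add[symmetric])
      also have "\<dots> = (\<Sum>i\<le>n. pc k' x i) * z ^ n" by (simp add: sum_distrib_right)
      also have "\<dots> = of_real (hr k (Suc n)) * z ^ n" unfolding snoc using hr_Suc_sum[of k' x n] pk' by simp
      finally show "(\<Sum>i\<le>n. pc k' x i * z ^ i * z ^ (n - i)) = of_real (hr k (Suc n)) * z ^ n" .
    qed
    finally have "Li k z * (\<Sum>n. z ^ n) = (\<Sum>n. of_real (hr k (Suc n)) * z ^ n)" .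
    moreover have "(\<Sum>n. z ^ n) = 1 / (1 - z)" using suminf_geometric[of z] z by simp
    ultimately show ?thesis by simp
  qed
  then show ?thesis using d dv by simp
qed

lemma Li_zero: "Li (k @ [s]) 0 = 0"
  unfolding Li_snoc by simp


lemma word_idx_snoc_e1: "word_idx (w @ [e1]) = word_idx w @ [1]"
proof (induction w rule: word_idx.induct)
  case 1 then show ?case by simp
next
  case (2 w)
  show ?case
  proof (cases "\<forall>x\<in>set w. x = e0")
    case True
    have t1: "takeWhile (\<lambda>x. x = e0) w = w" using True by (simp add: takeWhile_eq_all_conv)
    have d1: "dropWhile (\<lambda>x. x = e0) w = []" using True by (simp add: dropWhile_eq_Nil_conv)
    have t2: "takeWhile (\<lambda>x. x = e0) (w @ [e1]) = w" using True t1 by (simp add: takeWhile_append2)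
    have d2: "dropWhile (\<lambda>x. x = e0) (w @ [e1]) = [e1]" using True by (simp add: dropWhile_append2)
    show ?thesis by (simp only: word_idx.simps t1 d1 t2 d2 append.simps) simp
  next
    case False
    then obtain x where "x \<in> set w" "x \<noteq> e0" by auto
    then have "takeWhile (\<lambda>x. x = e0) (w @ [e1]) = takeWhile (\<lambda>x. x = e0) w"
      "dropWhile (\<lambda>x. x = e0) (w @ [e1]) = dropWhile (\<lambda>x. x = e0) w @ [e1]"
      by (auto simp: takeWhile_append1 dropWhile_append1)
    then show ?thesis using 2 by simp
  qed
next
  case (3 w) then show ?case by simp
qed

lemma word_idx_ne: "e1 \<in> set w \<Longrightarrow> word_idx w \<noteq> []"
  by (induction w rule: word_idx.induct) auto

lemma word_idx_pos: "pos (word_idx w)"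
  by (induction w rule: word_idx.induct) (auto simp: pos_def)

lemma letter_ne_e0: "x \<noteq> e0 \<Longrightarrow> x = e1"
  by (cases x) auto

lemma word_idx_snoc_e0:
  "e1 \<in> set w \<Longrightarrow> word_idx (w @ [e0]) = butlast (word_idx w) @ [Suc (last (word_idx w))]"
proof (induction w rule: word_idx.induct)
  case 1 then show ?case by simp
next
  case (2 w)
  show ?case
  proof (cases "\<forall>x\<in>set w. x = e0")
    case True
    have t1: "takeWhile (\<lambda>x. x = e0) w = w" using True by (simp add: takeWhile_eq_all_conv)
    have d1: "dropWhile (\<lambda>x. x = e0) w = []" using True by (simp add: dropWhile_eq_Nil_conv)
    have t2: "takeWhile (\<lambda>x. x = e0) (w @ [e0]) = w @ [e0]" using True by (simp add: takeWhile_eq_all_conv)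
    have d2: "dropWhile (\<lambda>x. x = e0) (w @ [e0]) = []" using True by (simp add: dropWhile_eq_Nil_conv)
    show ?thesis by (simp only: word_idx.simps t1 d1 t2 d2 append.simps) simp
  next
    case False
    then obtain x where x: "x \<in> set w" "x \<noteq> e0" by auto
    then have tw: "takeWhile (\<lambda>x. x = e0) (w @ [e0]) = takeWhile (\<lambda>x. x = e0) w"
      "dropWhile (\<lambda>x. x = e0) (w @ [e0]) = dropWhile (\<lambda>x. x = e0) w @ [e0]"
      by (auto simp: takeWhile_append1 dropWhile_append1)
    define dw where "dw = dropWhile (\<lambda>x. x = e0) w"
    have "dw \<noteq> []" unfolding dw_def using x by (auto simp: dropWhile_eq_Nil_conv)
    moreover have "hd dw \<noteq> e0" unfolding dw_def using x by (metis (full_types) hd_dropWhile \<open>dw \<noteq> []\<close> dw_def)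
    ultimately have "e1 \<in> set dw" using letter_ne_e0 by (metis list.set_sel(1))
    then have IH: "word_idx (dw @ [e0]) = butlast (word_idx dw) @ [Suc (last (word_idx dw))]"
      and ne: "word_idx dw \<noteq> []" using 2 word_idx_ne unfolding dw_def by auto
    have "word_idx (e1 # w @ [e0]) = Suc (length (takeWhile (\<lambda>x. x = e0) w)) # word_idx (dw @ [e0])"
      using tw unfolding dw_def by simp
    moreover have "word_idx (e1 # w) = Suc (length (takeWhile (\<lambda>x. x = e0) w)) # word_idx dw"
      unfolding dw_def by simp
    ultimately show ?thesis using IH ne by simp
  qed
next
  case (3 w) then show ?case by simp
qed

definition good :: "word \<Rightarrow> bool" where "good w = (w \<noteq> [] \<and> hd w = e1)"
definition h1 :: "word \<Rightarrow> bool" where "h1 w = (w = [] \<or> hd w = e1)"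

lemma good_e1: "good w \<Longrightarrow> e1 \<in> set w"
  unfolding good_def by (cases w) auto

lemma good_snoc: "h1 w \<Longrightarrow> w \<noteq> [] \<Longrightarrow> good (w @ [a])"
  unfolding good_def h1_def by (cases w) auto

lemma good_h1: "good w \<Longrightarrow> h1 w" unfolding good_def h1_def by auto

lemma Lword_good: "good w \<Longrightarrow> Lword w z = Li (word_idx w) z"
  unfolding Lword_def good_def by simp

lemma Lword_Nil[simp]: "Lword [] z = 1" unfolding Lword_def by simp

lemma word_idx_decomp:
  assumes "good w"
  obtains k s where "word_idx w = k @ [s]" "pos k" "1 \<le> s"
proof -
  have ne: "word_idx w \<noteq> []" using word_idx_ne[OF good_e1[OF assms]] .
  have p: "pos (word_idx w)" by (rule word_idx_pos)
  have e: "word_idx w = butlast (word_idx w) @ [last (word_idx w)]" using ne by simp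
  with p have "pos (butlast (word_idx w))" "1 \<le> last (word_idx w)"
    by (metis pos_snoc)+
  with e that show ?thesis by blast
qed

definition phi :: "letter \<Rightarrow> complex \<Rightarrow> complex" where
  "phi a z = (case a of e0 \<Rightarrow> 1 / z | e1 \<Rightarrow> 1 / (1 - z))"

lemma Lword_deriv_disk:
  assumes hw: "h1 w" and ga: "good (w @ [a])" and z: "norm z < 1" "z \<noteq> 0"
  shows "((\<lambda>z. Lword (w @ [a]) z) has_field_derivative phi a z * Lword w z) (at z)"
proof -
  have fe: "(\<lambda>z. Lword (w @ [a]) z) = Li (word_idx (w @ [a]))"
    using Lword_good[OF ga] by (simp add: fun_eq_iff)
  show ?thesis
  proof (cases a)
    case e1
    have Lw: "Lword w z = Li (word_idx w) z"
    proof (cases "w = []")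
      case True then show ?thesis by (simp add: Li_def)
    next
      case False then show ?thesis using hw Lword_good[of w] by (simp add: good_def h1_def)
    qed
    have "(Li (word_idx w @ [1]) has_field_derivative Li (word_idx w) z / (1 - z)) (at z)"
      by (rule Li_deriv_disk_e1[OF word_idx_pos z(1)])
    then have "(Li (word_idx (w @ [a])) has_field_derivative phi a z * Lword w z) (at z)"
      unfolding e1 word_idx_snoc_e1 Lw phi_def by (simp add: divide_inverse mult_ac)
    then show ?thesis unfolding fe .
  next
    case e0
    have wne: "w \<noteq> []" using ga e0 unfolding good_def by auto
    then have gw: "good w" using hw unfolding good_def h1_def by auto
    obtain k s where ks: "word_idx w = k @ [s]" "pos k" "1 \<le> s" using word_idx_decomp[OF gw] by blast
    have wi: "word_idx (w @ [e0]) = k @ [Suc s]" using word_idx_snoc_e0[OF good_e1[OF gw]] ks by simp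
    have "(Li (k @ [Suc s]) has_field_derivative Li (k @ [s]) z / z) (at z)"
      by (rule Li_deriv_disk_e0[OF ks(2,3) z])
    then have "(Li (word_idx (w @ [a])) has_field_derivative phi a z * Lword w z) (at z)"
      unfolding e0 wi phi_def using Lword_good[OF gw, of z] ks(1)
      by (simp add: divide_inverse mult_ac)
    then show ?thesis unfolding fe .
  qed
qed

lemma Lword_differentiable_disk:
  assumes "h1 w" "norm z < 1"
  shows "(\<lambda>z. Lword w z) field_differentiable (at z)"
proof (cases "w = []")
  case True then show ?thesis by (simp add: field_differentiable_const)
next
  case False
  then have gw: "good w" using assms unfolding good_def h1_def by auto
  obtain k s where ks: "word_idx w = k @ [s]" "pos k" "1 \<le> s" using word_idx_decomp[OF gw] by blast
  have "(\<lambda>z. Lword w z) = Li (k @ [s])" using Lword_good[OF gw] ks by (simp add: fun_eq_iff)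
  then show ?thesis using Li_differentiable_disk[OF ks(2,3) assms(2)] by simp
qed

lemma Lword_zero: "good w \<Longrightarrow> Lword w 0 = 0"
  using word_idx_decomp[of w] Lword_good[of w 0] Li_zero by metis

lemma L_Nil[simp]: "L [] z = 0" by (simp add: L_def)
lemma L_Cons[simp]: "L (w # ws) z = Lword w z + L ws z" by (simp add: L_def)
lemma L_append[simp]: "L (xs @ ys) z = L xs z + L ys z" by (simp add: L_def)
lemma L_mset: "L ws z = sum_mset (image_mset (\<lambda>w. Lword w z) (mset ws))"
  by (induction ws) auto
lemma L_mset_eq: "mset xs = mset ys \<Longrightarrow> L xs z = L ys z"
  by (simp add: L_mset)
lemma L_concat: "L (concat xss) z = (\<Sum>xs\<leftarrow>xss. L xs z)"
  by (induction xss) auto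

lemma shuf_Nil2[simp]: "shuf u [] = [u]" by (cases u) auto

lemma set_shuf_length: "w \<in> set (shuf u v) \<Longrightarrow> length w = length u + length v"
  by (induction u v arbitrary: w rule: shuf.induct) auto

lemma set_shuf_h1: "h1 u \<Longrightarrow> h1 v \<Longrightarrow> w \<in> set (shuf u v) \<Longrightarrow> h1 w"
  by (cases u; cases v) (auto simp: h1_def)

lemma set_shuf_ne: "w \<in> set (shuf u v) \<Longrightarrow> u \<noteq> [] \<or> v \<noteq> [] \<Longrightarrow> w \<noteq> []"
  using set_shuf_length[of w u v] by auto

lemma shuf_snoc_Nil1:
  "mset (shuf [a] (v @ [b])) = {#v @ [b, a]#} + mset (map (\<lambda>w. w @ [b]) (shuf [a] v))"
  by (induction v) (auto simp: mset_map image_mset.compositionality o_def add_ac)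

lemma shuf_snoc_Nil2:
  "mset (shuf (u @ [a]) [b]) = mset (map (\<lambda>w. w @ [a]) (shuf u [b])) + {#u @ [a, b]#}"
  by (induction u) (auto simp: mset_map image_mset.compositionality o_def add_ac)

lemma shuf_snoc:
  "mset (shuf (u @ [a]) (v @ [b])) =
     mset (map (\<lambda>w. w @ [a]) (shuf u (v @ [b]))) + mset (map (\<lambda>w. w @ [b]) (shuf (u @ [a]) v))"
proof (induction u v rule: shuf.induct)
  case (1 v) then show ?case using shuf_snoc_Nil1[of a v b] by simp
next
  case (2 c u) then show ?case using shuf_snoc_Nil2[of "c # u" a b] by simp
next
  case (3 c u d v)
  then show ?case by (simp add: mset_map image_mset.compositionality o_def add_ac)
qed


lemma L_map_snoc_deriv:
  assumes "\<forall>w\<in>set W. h1 w \<and> good (w @ [a])" "norm z < 1" "z \<noteq> 0"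
  shows "((\<lambda>z. L (map (\<lambda>w. w @ [a]) W) z) has_field_derivative phi a z * L W z) (at z)"
  using assms(1)
proof (induction W)
  case Nil then show ?case by simp
next
  case (Cons w W)
  have d1: "((\<lambda>z. Lword (w @ [a]) z) has_field_derivative phi a z * Lword w z) (at z)"
    using Lword_deriv_disk[of w a z] Cons.prems assms(2,3) by simp
  have d2: "((\<lambda>z. L (map (\<lambda>w. w @ [a]) W) z) has_field_derivative phi a z * L W z) (at z)"
    using Cons by simp
  have "((\<lambda>z. Lword (w @ [a]) z + L (map (\<lambda>w. w @ [a]) W) z) has_field_derivative
          phi a z * Lword w z + phi a z * L W z) (at z)"
    by (rule DERIV_add[OF d1 d2])
  then show ?case by (simp add: distrib_left)
qed

lemma L_differentiable:
  "\<forall>w\<in>set W. h1 w \<Longrightarrow> norm z < 1 \<Longrightarrow> (\<lambda>z. L W z) field_differentiable (at z)"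
proof (induction W)
  case Nil then show ?case by (simp add: field_differentiable_const)
next
  case (Cons w W)
  then have "(\<lambda>z. Lword w z + L W z) field_differentiable (at z)"
    by (intro field_differentiable_add Lword_differentiable_disk) auto
  then show ?case by simp
qed

lemma L_zero: "\<forall>w\<in>set W. good w \<Longrightarrow> L W 0 = 0"
  by (induction W) (auto simp: Lword_zero)

lemma h1_butlast: "h1 (u @ [a]) \<Longrightarrow> h1 u"
  unfolding h1_def by (cases u) auto

lemma shuf_disk:
  "h1 u \<Longrightarrow> h1 v \<Longrightarrow> norm z < 1 \<Longrightarrow> L (shuf u v) z = Lword u z * Lword v z"
proof (induction "length u + length v" arbitrary: u v z rule: less_induct)
  case less
  show ?case
  proof (cases "u = [] \<or> v = []")
    case True then show ?thesis by auto
  next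
    case False
    then obtain u' a v' b where u: "u = u' @ [a]" and v: "v = v' @ [b]" by (metis rev_exhaust)
    have h1u': "h1 u'" using less.prems(1) u h1_butlast by simp
    have h1v': "h1 v'" using less.prems(2) v h1_butlast by simp
    have gu: "good (u' @ [a])" using False less.prems(1) u unfolding good_def h1_def by auto
    have gv: "good (v' @ [b])" using False less.prems(2) v unfolding good_def h1_def by auto
    have IH1: "L (shuf u' v) z = Lword u' z * Lword v z" if "norm z < 1" for z
      using less.hyps[of u' v z] h1u' less.prems(2) that u by simp
    have IH2: "L (shuf u v') z = Lword u z * Lword v' z" if "norm z < 1" for z
      using less.hyps[of u v' z] h1v' less.prems(1) that v by simp
    have split: "L (shuf u v) z = L (map (\<lambda>w. w @ [a]) (shuf u' v)) z + L (map (\<lambda>w. w @ [b]) (shuf u v')) z" for z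
    proof -
      have "mset (shuf u v) = mset (map (\<lambda>w. w @ [a]) (shuf u' v) @ map (\<lambda>w. w @ [b]) (shuf u v'))"
        unfolding u v using shuf_snoc[of u' a v' b] by simp
      from L_mset_eq[OF this] show ?thesis by simp
    qed
    have W1: "\<forall>w\<in>set (shuf u' v). h1 w \<and> good (w @ [a])"
      using set_shuf_h1[OF h1u' less.prems(2)] set_shuf_ne[of _ u' v] False
      by (auto intro!: good_snoc)
    have W2: "\<forall>w\<in>set (shuf u v'). h1 w \<and> good (w @ [b])"
      using set_shuf_h1[OF less.prems(1) h1v'] set_shuf_ne[of _ u v'] False
      by (auto intro!: good_snoc)
    have Wh: "\<forall>w\<in>set (shuf u v). h1 w" using set_shuf_h1[OF less.prems(1,2)] by blast
    have Wg: "\<forall>w\<in>set (shuf u v). good w"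
      using set_shuf_h1[OF less.prems(1,2)] set_shuf_ne[of _ u v] False
      unfolding good_def h1_def by blast
    define F where "F z = L (shuf u v) z - Lword u z * Lword v z" for z
    have Fe: "F = (\<lambda>z. (L (map (\<lambda>w. w @ [a]) (shuf u' v)) z + L (map (\<lambda>w. w @ [b]) (shuf u v')) z)
                     - Lword (u' @ [a]) z * Lword (v' @ [b]) z)"
      unfolding F_def using split u v by (simp add: fun_eq_iff)
    have deriv: "DERIV F z :> 0" if zz: "z \<in> ball 0 1 - {0}" for z
    proof -
      have z1: "norm z < 1" "z \<noteq> 0" using zz by auto
      note d1 = L_map_snoc_deriv[OF W1 z1]
      note d2 = L_map_snoc_deriv[OF W2 z1]
      note d3 = Lword_deriv_disk[OF h1u' gu z1]
      note d4 = Lword_deriv_disk[OF h1v' gv z1]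
      have "DERIV F z :> (phi a z * L (shuf u' v) z + phi b z * L (shuf u v') z)
              - (phi a z * Lword u' z * Lword (v' @ [b]) z + phi b z * Lword v' z * Lword (u' @ [a]) z)"
        unfolding Fe by (intro DERIV_diff DERIV_add DERIV_mult d1 d2 d3 d4)
      moreover have "(phi a z * L (shuf u' v) z + phi b z * L (shuf u v') z)
              - (phi a z * Lword u' z * Lword (v' @ [b]) z + phi b z * Lword v' z * Lword (u' @ [a]) z) = 0"
        using IH1[OF z1(1)] IH2[OF z1(1)] u v by (simp add: algebra_simps)
      ultimately show ?thesis by simp
    qed
    have cont: "continuous_on (ball 0 1) F"
    proof -
      have "F field_differentiable (at z)" if "z \<in> ball 0 1" for z
      proof -
        have zn: "norm z < 1" using that by simp
        have "(\<lambda>z. L (shuf u v) z - Lword u z * Lword v z) field_differentiable (at z)"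
          by (intro field_differentiable_diff field_differentiable_mult L_differentiable[OF Wh zn]
                    Lword_differentiable_disk less.prems zn)
        then show ?thesis unfolding F_def[abs_def] .
      qed
      then show ?thesis
        by (intro continuous_at_imp_continuous_on ballI field_differentiable_imp_continuous_at) auto
    qed
    obtain c where c: "\<And>z. z \<in> ball 0 1 \<Longrightarrow> F z = c"
      using DERIV_zero_connected_constant[of "ball 0 1" "{0}" F] cont deriv by auto
    have "F 0 = 0"
      unfolding F_def using L_zero[OF Wg] Lword_zero gu u by simp
    then have "c = 0" using c[of 0] by simp
    then have "F z = 0" using c[of z] less.prems(3) by simp
    then show ?thesis unfolding F_def by simp
  qed
qed

lemma Lword_abel:
  assumes "h1 w" "norm z0 = 1" "z0 \<noteq> 1"
  shows "((\<lambda>\<rho>. Lword w (of_real \<rho> * z0)) \<longlongrightarrow> Lword w z0) (at_left 1)"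
proof (cases "w = []")
  case True then show ?thesis by simp
next
  case False
  then have gw: "good w" using assms(1) unfolding good_def h1_def by auto
  obtain k s where ks: "word_idx w = k @ [s]" "pos k" "1 \<le> s" using word_idx_decomp[OF gw] by blast
  define b where "b n = pc k s n * z0 ^ n" for n
  have sb: "summable b"
  proof -
    have "summable (\<lambda>M. z0 ^ Suc M * ac k s M)" using Li_summable[OF ks(2,3) _ assms(3)] assms(2) by simp
    then have "summable (\<lambda>n. b (Suc n))" unfolding b_def pc_def by (simp add: mult_ac)
    then show ?thesis by (simp add: summable_Suc_iff)
  qed
  have e1: "Lword w (of_real \<rho> * z0) = (\<Sum>n. b n * of_real \<rho> ^ n)" for \<rho>
    unfolding Lword_good[OF gw] ks Li_powser b_def by (simp add: power_mult_distrib mult_ac)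
  have e2: "Lword w z0 = (\<Sum>n. b n)"
    unfolding Lword_good[OF gw] ks Li_powser b_def ..
  show ?thesis unfolding e1 e2 by (rule abel_limit[OF sb])
qed

lemma L_abel:
  assumes "\<forall>w\<in>set W. h1 w" "norm z0 = 1" "z0 \<noteq> 1"
  shows "((\<lambda>\<rho>. L W (of_real \<rho> * z0)) \<longlongrightarrow> L W z0) (at_left 1)"
  using assms(1)
proof (induction W)
  case Nil then show ?case by simp
next
  case (Cons w W)
  then have "((\<lambda>\<rho>. Lword w (of_real \<rho> * z0) + L W (of_real \<rho> * z0)) \<longlongrightarrow> Lword w z0 + L W z0) (at_left 1)"
    by (intro tendsto_add Lword_abel assms) auto
  then show ?case by simp
qed

lemma shuf_circle:
  assumes hu: "h1 u" and hv: "h1 v" and z0: "norm z0 = 1" "z0 \<noteq> 1"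
  shows "L (shuf u v) z0 = Lword u z0 * Lword v z0"
proof -
  have Wh: "\<forall>w\<in>set (shuf u v). h1 w" using set_shuf_h1[OF hu hv] by blast
  have l1: "((\<lambda>\<rho>. L (shuf u v) (of_real \<rho> * z0)) \<longlongrightarrow> L (shuf u v) z0) (at_left 1)"
    by (rule L_abel[OF Wh z0])
  have l2: "((\<lambda>\<rho>. Lword u (of_real \<rho> * z0) * Lword v (of_real \<rho> * z0)) \<longlongrightarrow> Lword u z0 * Lword v z0) (at_left 1)"
    by (intro tendsto_mult Lword_abel hu hv z0)
  have ev: "\<forall>\<^sub>F \<rho> in at_left (1::real). Lword u (of_real \<rho> * z0) * Lword v (of_real \<rho> * z0) = L (shuf u v) (of_real \<rho> * z0)"
  proof -
    have "eventually (\<lambda>\<rho>. \<rho> \<in> {0<..<(1::real)}) (at_left 1)"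
      by (rule eventually_at_left_real) simp
    then show ?thesis
    proof eventually_elim
      case (elim \<rho>)
      have "norm (of_real \<rho> * z0) < 1" using elim z0 by (simp add: norm_mult)
      then show ?case using shuf_disk[OF hu hv] by simp
    qed
  qed
  have l3: "((\<lambda>\<rho>. L (shuf u v) (of_real \<rho> * z0)) \<longlongrightarrow> Lword u z0 * Lword v z0) (at_left 1)"
    using tendsto_cong[OF ev] l2 by simp
  show ?thesis using tendsto_unique[OF _ l1 l3] by (simp add: trivial_limit_at_left_real)
qed

lemma set_shufL: "w \<in> set (shufL W E) \<longleftrightarrow> (\<exists>x\<in>set W. \<exists>y\<in>set E. w \<in> set (shuf x y))"
  unfolding shufL_def by auto

lemma shufL_Cons: "shufL (x # W) E = concat (map (\<lambda>y. shuf x y) E) @ shufL W E"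
  unfolding shufL_def by simp

lemma shufL_Nil: "shufL [] E = []"
  unfolding shufL_def by simp

lemma L_shufL:
  assumes "\<forall>w\<in>set W. h1 w" "\<forall>w\<in>set E. h1 w"
    and sh: "\<And>u v. h1 u \<Longrightarrow> h1 v \<Longrightarrow> L (shuf u v) z = Lword u z * Lword v z"
  shows "L (shufL W E) z = L W z * L E z"
  using assms(1)
proof (induction W)
  case Nil then show ?case by (simp add: shufL_Nil)
next
  case (Cons x W)
  have hx: "h1 x" using Cons.prems by simp
  have "L (concat (map (\<lambda>y. shuf x y) E)) z = Lword x z * L E z"
    using assms(2)
  proof (induction E)
    case Nil then show ?case by simp
  next
    case (Cons y E)
    then show ?case using sh[OF hx, of y] by (simp add: distrib_left)
  qed
  then show ?case using Cons by (simp add: shufL_Cons distrib_right)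
qed

lemma e1pow_0: "e1pow 0 = [[]]" unfolding e1pow_def by simp
lemma e1pow_Suc: "e1pow (Suc r) = shufL [[e1]] (e1pow r)" unfolding e1pow_def by simp

lemma e1pow_h1: "w \<in> set (e1pow r) \<Longrightarrow> h1 w"
proof (induction r arbitrary: w)
  case 0 then show ?case by (simp add: e1pow_0 h1_def)
next
  case (Suc r)
  then obtain y where "y \<in> set (e1pow r)" "w \<in> set (shuf [e1] y)"
    unfolding e1pow_Suc set_shufL by auto
  then show ?case using set_shuf_h1[of "[e1]" y w] Suc.IH by (simp add: h1_def)
qed

lemma Lword_e1: "Lword [e1] z = Li [1] z"
  unfolding Lword_def by simp

lemma L_e1pow_circle:
  assumes "norm z0 = 1" "z0 \<noteq> 1"
  shows "L (e1pow r) z0 = Li [1] z0 ^ r"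
proof (induction r)
  case 0 then show ?case by (simp add: e1pow_0)
next
  case (Suc r)
  have A: "\<forall>w\<in>set [[e1]]. h1 w" by (simp add: h1_def)
  have B: "\<forall>w\<in>set (e1pow r). h1 w" using e1pow_h1 by blast
  have C: "\<And>u v. h1 u \<Longrightarrow> h1 v \<Longrightarrow> L (shuf u v) z0 = Lword u z0 * Lword v z0"
    using shuf_circle assms by blast
  have "L (e1pow (Suc r)) z0 = L [[e1]] z0 * L (e1pow r) z0"
    unfolding e1pow_Suc by (rule L_shufL[OF A B C])
  then show ?case using Suc by (simp add: Lword_e1)
qed

lemma L_shufL_circle:
  assumes "\<forall>w\<in>set W. h1 w" "\<forall>w\<in>set E. h1 w" "norm z0 = 1" "z0 \<noteq> 1"
  shows "L (shufL W E) z0 = L W z0 * L E z0"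
  by (rule L_shufL[OF assms(1,2)]) (rule shuf_circle; (simp add: assms)?)


declare wjr.simps[simp del]

lemma wjr_Nil1[simp]: "wjr [] r = [[]]" by (subst wjr.simps) simp
lemma wjr_Nil2[simp]: "wjr j [] = [[]]" by (subst wjr.simps) simp
lemma wjr_snoc: "wjr (j @ [t]) (r @ [x]) = map (\<lambda>u. u @ replicate (Suc t) e0) (shufL (wjr j r) (e1pow x))"
  by (subst wjr.simps) simp

lemma e1pow_length: "w \<in> set (e1pow x) \<Longrightarrow> length w = x"
proof (induction x arbitrary: w)
  case 0 then show ?case by (simp add: e1pow_0)
next
  case (Suc x)
  then obtain y where "y \<in> set (e1pow x)" "w \<in> set (shuf [e1] y)"
    unfolding e1pow_Suc set_shufL by auto
  then show ?case using set_shuf_length Suc.IH by fastforce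
qed

lemma good_append: "good u \<Longrightarrow> good (u @ v)"
  unfolding good_def by (cases u) auto

lemma S_good:
  "length j = length r \<Longrightarrow> 1 \<le> hd (r @ [x]) \<Longrightarrow> u \<in> set (shufL (wjr j r) (e1pow x)) \<Longrightarrow> good u"
proof (induction j arbitrary: r x u rule: rev_induct)
  case Nil
  then have r: "r = []" by simp
  from Nil.prems(3) obtain y e where y: "y \<in> set (wjr [] r)" and e: "e \<in> set (e1pow x)" and u: "u \<in> set (shuf y e)"
    unfolding set_shufL by blast
  have "y = []" using y by simp
  then have ue: "u = e" using u by simp
  have "length e = x" by (rule e1pow_length[OF e])
  moreover have "1 \<le> x" using Nil.prems(2) r by simp
  ultimately show ?case using e1pow_h1[OF e] ue unfolding good_def h1_def by auto
next
  case (snoc t j)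
  obtain r' x' where r: "r = r' @ [x']" using snoc.prems(1) by (cases r rule: rev_exhaust) auto
  have lj: "length j = length r'" using snoc.prems(1) r by simp
  from snoc.prems(3) obtain y e where y: "y \<in> set (wjr (j @ [t]) r)" and e: "e \<in> set (e1pow x)" and u: "u \<in> set (shuf y e)"
    unfolding set_shufL by blast
  from y obtain u' where u': "u' \<in> set (shufL (wjr j r') (e1pow x'))" and yu: "y = u' @ replicate (Suc t) e0"
    unfolding r wjr_snoc by auto
  have "hd (r' @ [x']) = hd (r @ [x])" unfolding r by (cases r') auto
  then have "good u'" using snoc.IH[OF lj _ u'] snoc.prems(2) by simp
  then have gy: "good y" unfolding yu by (rule good_append)
  have "h1 u" using set_shuf_h1[OF good_h1[OF gy] e1pow_h1[OF e] u] .
  moreover have "u \<noteq> []" using set_shuf_ne[OF u] gy unfolding good_def by auto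
  ultimately show ?case unfolding good_def h1_def by auto
qed

lemma wjr_h1:
  assumes "length j = length r" "r = [] \<or> 1 \<le> hd r" "w \<in> set (wjr j r)"
  shows "h1 w"
proof (cases "r = []")
  case True then show ?thesis using assms by (simp add: h1_def)
next
  case False
  then obtain r' x where r: "r = r' @ [x]" by (metis rev_exhaust)
  then obtain j' t where j: "j = j' @ [t]" using assms(1) by (cases j rule: rev_exhaust) auto
  from assms(3) obtain u where u: "u \<in> set (shufL (wjr j' r') (e1pow x))" and w: "w = u @ replicate (Suc t) e0"
    unfolding r j wjr_snoc by auto
  have "good u" using S_good[OF _ _ u] assms(1,2) False r j by simp
  then show ?thesis unfolding w by (intro good_h1 good_append)
qed

lemma Lword_e0_deriv_circle:
  assumes gu: "good u" and \<sigma>: "0 < \<sigma>" "\<sigma> < 2 * pi"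
  shows "((\<lambda>t. Lword (u @ [e0]) (exp (\<i> * complex_of_real t))) has_vector_derivative
           \<i> * Lword u (exp (\<i> * complex_of_real \<sigma>))) (at \<sigma>)"
proof -
  obtain k s where ks: "word_idx u = k @ [s]" "pos k" "1 \<le> s" using word_idx_decomp[OF gu] by blast
  have wi: "word_idx (u @ [e0]) = k @ [Suc s]" using word_idx_snoc_e0[OF good_e1[OF gu]] ks by simp
  have g2: "good (u @ [e0])" by (rule good_append[OF gu])
  have "(\<lambda>t. Lword (u @ [e0]) (exp (\<i> * complex_of_real t))) = (\<lambda>t. Li (k @ [Suc s]) (exp (\<i> * complex_of_real t)))"
    using Lword_good[OF g2] wi by simp
  moreover have "Lword u (exp (\<i> * complex_of_real \<sigma>)) = Li (k @ [s]) (exp (\<i> * complex_of_real \<sigma>))"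
    using Lword_good[OF gu] ks by simp
  ultimately show ?thesis using Li_deriv_circle[OF ks(2,3) \<sigma>] by simp
qed

lemma L_map_e0_deriv_circle:
  assumes "\<forall>u\<in>set U. good u" and \<sigma>: "0 < \<sigma>" "\<sigma> < 2 * pi"
  shows "((\<lambda>t. L (map (\<lambda>u. u @ [e0]) U) (exp (\<i> * complex_of_real t))) has_vector_derivative
           \<i> * L U (exp (\<i> * complex_of_real \<sigma>))) (at \<sigma>)"
  using assms(1)
proof (induction U)
  case Nil then show ?case by simp
next
  case (Cons u U)
  have "((\<lambda>t. Lword (u @ [e0]) (exp (\<i> * complex_of_real t)) + L (map (\<lambda>u. u @ [e0]) U) (exp (\<i> * complex_of_real t)))
        has_vector_derivative \<i> * Lword u (exp (\<i> * complex_of_real \<sigma>)) + \<i> * L U (exp (\<i> * complex_of_real \<sigma>))) (at \<sigma>)"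
    using Cons by (intro has_vector_derivative_add Lword_e0_deriv_circle \<sigma>) auto
  then show ?case by (simp add: distrib_left)
qed

lemma pow_deriv:
  "((\<lambda>s. (\<i> * complex_of_real s) ^ N) has_vector_derivative
      (of_nat N * \<i> * (\<i> * complex_of_real \<sigma>) ^ (N - 1))) (at \<sigma>)"
proof -
  have "((\<lambda>w. (\<i> * w) ^ N) has_field_derivative (of_nat N * \<i> * (\<i> * w) ^ (N - 1))) (at w)" for w
    by (auto intro!: derivative_eq_intros simp: mult_ac)
  from has_vector_derivative_real_field[OF this, of "of_real \<sigma>" UNIV] show ?thesis by simp
qed

definition cT :: "nat \<Rightarrow> nat \<Rightarrow> real" where
  "cT Q t = (-1) ^ t * fact Q / fact (Q - t)"

lemma cT_rec: "t < Q \<Longrightarrow> cT Q t * real (Q - t) = - cT Q (Suc t)"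
proof -
  assume t: "t < Q"
  then have "Q - t = Suc (Q - Suc t)" by simp
  then have f: "(fact (Q - t) :: real) = real (Q - t) * fact (Q - Suc t)" by (simp add: fact_Suc)
  have "Q - t > 0" using t by simp
  then show ?thesis unfolding cT_def f by (simp add: field_simps)
qed

lemma tele_deriv:
  fixes X :: "nat \<Rightarrow> real \<Rightarrow> complex" and Y :: complex
  assumes dS: "\<And>t. (X (Suc t) has_vector_derivative \<i> * X t \<sigma>) (at \<sigma>)"
    and d0: "(X 0 has_vector_derivative \<i> * Y) (at \<sigma>)"
  shows "((\<lambda>s. \<Sum>t\<le>Q. of_real (cT Q t) * (\<i> * of_real s) ^ (Q - t) * X t s) has_vector_derivative
           \<i> * (\<i> * of_real \<sigma>) ^ Q * Y) (at \<sigma>)"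
proof -
  define X' where "X' t = (if t = 0 then \<i> * Y else \<i> * X (t - 1) \<sigma>)" for t
  have dX: "(X t has_vector_derivative X' t) (at \<sigma>)" for t
    using dS[of "t - 1"] d0 unfolding X'_def by (cases t) auto
  define u where "u t = of_real (cT Q t) * ((\<i> * of_real \<sigma>) ^ (Q - t) * X' t)" for t
  define v where "v t = of_real (cT Q t) * (of_nat (Q - t) * \<i> * (\<i> * of_real \<sigma>) ^ (Q - t - 1) * X t \<sigma>)" for t
  have d: "((\<lambda>s. \<Sum>t\<le>Q. of_real (cT Q t) * (\<i> * of_real s) ^ (Q - t) * X t s) has_vector_derivative
           (\<Sum>t\<le>Q. u t + v t)) (at \<sigma>)"
  proof (rule has_vector_derivative_sum)
    fix t assume "t \<in> {..Q}"
    have "((\<lambda>s. (\<i> * of_real s) ^ (Q - t) * X t s) has_vector_derivative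
           (\<i> * of_real \<sigma>) ^ (Q - t) * X' t + of_nat (Q - t) * \<i> * (\<i> * of_real \<sigma>) ^ (Q - t - 1) * X t \<sigma>) (at \<sigma>)"
      by (rule has_vector_derivative_mult[OF pow_deriv dX])
    then have "((\<lambda>s. of_real (cT Q t) * ((\<i> * of_real s) ^ (Q - t) * X t s)) has_vector_derivative
           of_real (cT Q t) * ((\<i> * of_real \<sigma>) ^ (Q - t) * X' t + of_nat (Q - t) * \<i> * (\<i> * of_real \<sigma>) ^ (Q - t - 1) * X t \<sigma>)) (at \<sigma>)"
      by (rule has_vector_derivative_mult_right)
    then show "((\<lambda>s. of_real (cT Q t) * (\<i> * of_real s) ^ (Q - t) * X t s) has_vector_derivative u t + v t) (at \<sigma>)"
      unfolding u_def v_def by (simp add: distrib_left mult.assoc)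
  qed
  have vu: "v t = - u (Suc t)" if "t < Q" for t
  proof -
    have e1: "Q - t - 1 = Q - Suc t" by simp
    have "v t = of_real (cT Q t * real (Q - t)) * (\<i> * (\<i> * of_real \<sigma>) ^ (Q - Suc t) * X t \<sigma>)"
      unfolding v_def e1 by (simp add: mult_ac)
    also have "\<dots> = - u (Suc t)" unfolding cT_rec[OF that] u_def X'_def by (simp add: mult_ac)
    finally show ?thesis .
  qed
  have vQ: "v Q = 0" unfolding v_def by simp
  have u0: "u 0 = \<i> * (\<i> * of_real \<sigma>) ^ Q * Y" unfolding u_def X'_def cT_def by simp
  have "(\<Sum>t\<le>Q. u t + v t) = u 0"
  proof (cases Q)
    case 0 then show ?thesis using vQ by simp
  next
    case (Suc Q')
    have "(\<Sum>t\<le>Q. u t + v t) = (\<Sum>t\<le>Q. u t) + (\<Sum>t\<le>Q. v t)" by (simp add: sum.distrib)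
    also have "(\<Sum>t\<le>Q. u t) = u 0 + (\<Sum>t\<le>Q'. u (Suc t))" unfolding Suc by (rule sum.atMost_Suc_shift)
    also have "(\<Sum>t\<le>Q. v t) = (\<Sum>t\<le>Q'. v t) + v Q" unfolding Suc by simp
    also have "(\<Sum>t\<le>Q'. v t) = (\<Sum>t\<le>Q'. - u (Suc t))" by (intro sum.cong refl vu) (simp add: Suc)
    finally show ?thesis using vQ by (simp add: sum_negf)
  qed
  then show ?thesis using d u0 by simp
qed


definition J :: "nat list \<Rightarrow> nat list set" where
  "J qb = {j. length j = length qb \<and> idx_preceq j qb}"

definition Fq :: "nat list \<Rightarrow> nat list \<Rightarrow> real \<Rightarrow> complex" where
  "Fq qb rr \<sigma> = (\<Sum>j\<in>J qb. of_real (Cc qb j) * (\<i> * of_real \<sigma>) ^ (sum_list qb - sum_list j)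
                     * L (wjr j rr) (exp (\<i> * of_real \<sigma>)))"

declare Cc.simps[simp del]
lemma Cc_Nil1[simp]: "Cc [] j = 1" by (subst Cc.simps) simp
lemma Cc_Nil2[simp]: "Cc q [] = 1" by (subst Cc.simps) simp
lemma Cc_snoc: "Cc (qb @ [x]) (j @ [t]) =
   (-1) ^ t * fact (sum_list (qb @ [x]) - sum_list j) / fact (sum_list (qb @ [x]) - sum_list (j @ [t])) * Cc qb j"
  by (subst Cc.simps) simp

lemma J_Nil: "J [] = {[]}" unfolding J_def idx_preceq_def by auto

lemma idx_preceq_snoc:
  assumes "length j = length qb"
  shows "idx_preceq (j @ [t]) (qb @ [x]) \<longleftrightarrow> idx_preceq j qb \<and> sum_list j + t \<le> sum_list qb + x"
proof -
  have tk: "take s (j @ [t]) = take s j" "take s (qb @ [x]) = take s qb" if "s \<le> length qb" for s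
    using that assms by auto
  have "idx_preceq (j @ [t]) (qb @ [x]) \<longleftrightarrow>
        (\<forall>s\<le>length qb. sum_list (take s (j @ [t])) \<le> sum_list (take s (qb @ [x])))
        \<and> sum_list (take (Suc (length qb)) (j @ [t])) \<le> sum_list (take (Suc (length qb)) (qb @ [x]))"
    unfolding idx_preceq_def by (auto simp: le_Suc_eq)
  also have "\<dots> \<longleftrightarrow> idx_preceq j qb \<and> sum_list j + t \<le> sum_list qb + x"
    unfolding idx_preceq_def using tk assms by auto
  finally show ?thesis .
qed

lemma J_sum_le: "j \<in> J qb \<Longrightarrow> sum_list j \<le> sum_list qb"
  unfolding J_def idx_preceq_def by (metis (mono_tags, lifting) mem_Collect_eq order_refl take_all)

lemma J_snoc: "J (qb @ [x]) = (\<lambda>(j, t). j @ [t]) ` (SIGMA j:J qb. {..sum_list (qb @ [x]) - sum_list j})"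
proof (intro set_eqI iffI)
  fix j' assume j': "j' \<in> J (qb @ [x])"
  then have "length j' = Suc (length qb)" unfolding J_def by simp
  then obtain j t where jt: "j' = j @ [t]" by (cases j' rule: rev_exhaust) auto
  then have lj: "length j = length qb" using j' unfolding J_def by simp
  have "idx_preceq j qb" "sum_list j + t \<le> sum_list qb + x"
    using j' jt idx_preceq_snoc[OF lj] unfolding J_def by auto
  then show "j' \<in> (\<lambda>(j, t). j @ [t]) ` (SIGMA j:J qb. {..sum_list (qb @ [x]) - sum_list j})"
    unfolding jt J_def using lj by (auto intro!: image_eqI[of _ _ "(j, t)"])
next
  fix j' assume "j' \<in> (\<lambda>(j, t). j @ [t]) ` (SIGMA j:J qb. {..sum_list (qb @ [x]) - sum_list j})"
  then obtain j t where jt: "j' = j @ [t]" and j: "j \<in> J qb" and t: "t \<le> sum_list (qb @ [x]) - sum_list j" by auto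
  have lj: "length j = length qb" using j unfolding J_def by simp
  have "sum_list j \<le> sum_list qb" using J_sum_le[OF j] .
  then have "sum_list j + t \<le> sum_list qb + x" using t by simp
  then show "j' \<in> J (qb @ [x])" unfolding jt J_def using idx_preceq_snoc[OF lj] j lj unfolding J_def by auto
qed

lemma finite_J: "finite (J qb)"
proof (induction qb rule: rev_induct)
  case Nil then show ?case by (simp add: J_Nil)
next
  case (snoc x qb) then show ?case unfolding J_snoc by auto
qed

lemma Fq_Nil: "Fq [] [] \<sigma> = 1"
  unfolding Fq_def J_Nil by simp

lemma Fq_snoc:
  "Fq (qb @ [x]) rr s = (\<Sum>j\<in>J qb. of_real (Cc qb j) *
      (\<Sum>t\<le>sum_list (qb @ [x]) - sum_list j. of_real (cT (sum_list (qb @ [x]) - sum_list j) t)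
          * (\<i> * of_real s) ^ (sum_list (qb @ [x]) - sum_list j - t) * L (wjr (j @ [t]) rr) (exp (\<i> * of_real s))))"
proof -
  let ?Q = "\<lambda>j. sum_list (qb @ [x]) - sum_list j"
  let ?f = "\<lambda>j'. of_real (Cc (qb @ [x]) j') * (\<i> * of_real s) ^ (sum_list (qb @ [x]) - sum_list j')
                     * L (wjr j' rr) (exp (\<i> * of_real s))"
  have inj: "inj_on (\<lambda>(j, t). j @ [t]) (SIGMA j:J qb. {..?Q j})"
    by (auto simp: inj_on_def)
  have "Fq (qb @ [x]) rr s = sum ?f (J (qb @ [x]))" unfolding Fq_def ..
  also have "\<dots> = sum (?f \<circ> (\<lambda>(j, t). j @ [t])) (SIGMA j:J qb. {..?Q j})"
    unfolding J_snoc by (rule sum.reindex[OF inj])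
  also have "\<dots> = (\<Sum>(j, t)\<in>(SIGMA j:J qb. {..?Q j}). ?f (j @ [t]))"
    by (intro sum.cong refl) auto
  also have "\<dots> = (\<Sum>j\<in>J qb. \<Sum>t\<le>?Q j. ?f (j @ [t]))"
    by (rule sum.Sigma[symmetric]) (auto simp: finite_J)
  also have "\<dots> = (\<Sum>j\<in>J qb. of_real (Cc qb j) *
      (\<Sum>t\<le>?Q j. of_real (cT (?Q j) t) * (\<i> * of_real s) ^ (?Q j - t) * L (wjr (j @ [t]) rr) (exp (\<i> * of_real s))))"
  proof (intro sum.cong refl)
    fix j assume j: "j \<in> J qb"
    show "(\<Sum>t\<le>?Q j. ?f (j @ [t])) = of_real (Cc qb j) *
      (\<Sum>t\<le>?Q j. of_real (cT (?Q j) t) * (\<i> * of_real s) ^ (?Q j - t) * L (wjr (j @ [t]) rr) (exp (\<i> * of_real s)))"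
      unfolding sum_distrib_left
    proof (intro sum.cong refl)
      fix t assume t: "t \<in> {..?Q j}"
      have e: "sum_list (qb @ [x]) - sum_list (j @ [t]) = ?Q j - t" by simp
      have c: "Cc (qb @ [x]) (j @ [t]) = cT (?Q j) t * Cc qb j"
        unfolding Cc_snoc cT_def e by simp
      show "?f (j @ [t]) = of_real (Cc qb j) * (of_real (cT (?Q j) t) * (\<i> * of_real s) ^ (?Q j - t)
              * L (wjr (j @ [t]) rr) (exp (\<i> * of_real s)))"
        unfolding c e by (simp add: mult_ac)
    qed
  qed
  finally show ?thesis .
qed

lemma rep_snoc: "replicate (Suc n) a = replicate n a @ [a]"
  by (induction n) auto

lemma KL:
  assumes len: "length qb = length rr" and rne: "rr \<noteq> []" and hr: "1 \<le> hd rr"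
    and \<sigma>: "0 < \<sigma>" "\<sigma> < 2 * pi"
  shows "((\<lambda>s. Fq qb rr s) has_vector_derivative
           \<i> * (\<i> * of_real \<sigma>) ^ last qb * Li [1] (exp (\<i> * of_real \<sigma>)) ^ last rr
             * Fq (butlast qb) (butlast rr) \<sigma>) (at \<sigma>)"
proof -
  obtain rr' y where rr: "rr = rr' @ [y]" using rne by (cases rr rule: rev_exhaust) auto
  obtain qb' x where qb: "qb = qb' @ [x]" using len rne by (cases qb rule: rev_exhaust) auto
  have len': "length qb' = length rr'" using len rr qb by simp
  define z where "z = exp (\<i> * complex_of_real \<sigma>)"
  have z: "norm z = 1" "z \<noteq> 1" unfolding z_def using exp_circle_ne1[OF \<sigma>] by simp_all
  define Q where "Q j = sum_list (qb' @ [x]) - sum_list j" for j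
  define S where "S j = shufL (wjr j rr') (e1pow y)" for j
  define X where "X j t s = L (wjr (j @ [t]) (rr' @ [y])) (exp (\<i> * complex_of_real s))" for j t s
  define Y where "Y j = L (wjr j rr') z * Li [1] z ^ y" for j
  have T: "((\<lambda>s. \<Sum>t\<le>Q j. of_real (cT (Q j) t) * (\<i> * of_real s) ^ (Q j - t) * X j t s) has_vector_derivative
           \<i> * (\<i> * of_real \<sigma>) ^ (Q j) * Y j) (at \<sigma>)" if j: "j \<in> J qb'" for j
  proof (rule tele_deriv)
    have lj: "length j = length rr'" using j len' unfolding J_def by simp
    have hd1: "1 \<le> hd (rr' @ [y])" using hr rr by simp
    have gS: "\<forall>u\<in>set (S j). good u" unfolding S_def using S_good[OF lj hd1] by blast
    have Xe: "X j t s = L (map (\<lambda>u. u @ replicate (Suc t) e0) (S j)) (exp (\<i> * complex_of_real s))" for t s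
      unfolding X_def S_def wjr_snoc ..
    show "(X j (Suc t) has_vector_derivative \<i> * X j t \<sigma>) (at \<sigma>)" for t
    proof -
      have m: "map (\<lambda>u. u @ replicate (Suc (Suc t)) e0) (S j) = map (\<lambda>u. u @ [e0]) (map (\<lambda>u. u @ replicate (Suc t) e0) (S j))"
      proof -
        have ar: "u @ replicate (Suc (Suc t)) e0 = (u @ replicate (Suc t) e0) @ [e0]" for u
          by (subst rep_snoc) simp
        show ?thesis by (simp only: map_map o_def ar)
      qed
      have g: "\<forall>u\<in>set (map (\<lambda>u. u @ replicate (Suc t) e0) (S j)). good u" using gS by (auto intro: good_append)
      have xe: "X j (Suc t) = (\<lambda>s. L (map (\<lambda>u. u @ [e0]) (map (\<lambda>u. u @ replicate (Suc t) e0) (S j))) (exp (\<i> * complex_of_real s)))"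
        by (rule ext) (simp only: Xe m)
      show ?thesis unfolding xe Xe[of t \<sigma>] by (rule L_map_e0_deriv_circle[OF g \<sigma>])
    qed
    show "(X j 0 has_vector_derivative \<i> * Y j) (at \<sigma>)"
    proof -
      have "X j 0 = (\<lambda>s. L (map (\<lambda>u. u @ [e0]) (S j)) (exp (\<i> * complex_of_real s)))"
        by (rule ext) (simp only: Xe replicate_Suc replicate_0)
      moreover have "L (S j) z = Y j"
      proof -
        have h1w: "\<forall>w\<in>set (wjr j rr'). h1 w"
          using wjr_h1[OF lj] hr rr by (cases rr') auto
        have h1e: "\<forall>w\<in>set (e1pow y). h1 w" using e1pow_h1 by blast
        show ?thesis unfolding S_def Y_def
          using L_shufL_circle[OF h1w h1e z] L_e1pow_circle[OF z] by simp
      qed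
      ultimately show ?thesis using L_map_e0_deriv_circle[OF gS \<sigma>] unfolding z_def by simp
    qed
  qed
  have Fe: "(\<lambda>s. Fq qb rr s) = (\<lambda>s. \<Sum>j\<in>J qb'. of_real (Cc qb' j) *
      (\<Sum>t\<le>Q j. of_real (cT (Q j) t) * (\<i> * of_real s) ^ (Q j - t) * X j t s))"
    unfolding qb rr Fq_snoc Q_def X_def by simp
  have d: "((\<lambda>s. Fq qb rr s) has_vector_derivative
            (\<Sum>j\<in>J qb'. of_real (Cc qb' j) * (\<i> * (\<i> * of_real \<sigma>) ^ (Q j) * Y j))) (at \<sigma>)"
    unfolding Fe by (intro has_vector_derivative_sum has_vector_derivative_mult_right T)
  have "(\<Sum>j\<in>J qb'. of_real (Cc qb' j) * (\<i> * (\<i> * of_real \<sigma>) ^ (Q j) * Y j))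
        = \<i> * (\<i> * of_real \<sigma>) ^ x * Li [1] z ^ y * Fq qb' rr' \<sigma>"
  proof -
    have "of_real (Cc qb' j) * (\<i> * (\<i> * of_real \<sigma>) ^ (Q j) * Y j)
          = \<i> * (\<i> * of_real \<sigma>) ^ x * Li [1] z ^ y *
            (of_real (Cc qb' j) * (\<i> * of_real \<sigma>) ^ (sum_list qb' - sum_list j) * L (wjr j rr') z)"
      if j: "j \<in> J qb'" for j
    proof -
      have "Q j = x + (sum_list qb' - sum_list j)" unfolding Q_def using J_sum_le[OF j] by simp
      then have "(\<i> * of_real \<sigma>) ^ (Q j) = (\<i> * of_real \<sigma>) ^ x * (\<i> * of_real \<sigma>) ^ (sum_list qb' - sum_list j)"
        by (simp add: power_add)
      then show ?thesis unfolding Y_def by (simp add: mult_ac)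
    qed
    then have "(\<Sum>j\<in>J qb'. of_real (Cc qb' j) * (\<i> * (\<i> * of_real \<sigma>) ^ (Q j) * Y j))
        = (\<Sum>j\<in>J qb'. \<i> * (\<i> * of_real \<sigma>) ^ x * Li [1] z ^ y *
            (of_real (Cc qb' j) * (\<i> * of_real \<sigma>) ^ (sum_list qb' - sum_list j) * L (wjr j rr') z))"
      by (rule sum.cong[OF refl])
    also have "\<dots> = \<i> * (\<i> * of_real \<sigma>) ^ x * Li [1] z ^ y * Fq qb' rr' \<sigma>"
      unfolding Fq_def z_def by (simp add: sum_distrib_left)
    finally show ?thesis .
  qed
  then show ?thesis using d unfolding qb rr z_def by simp
qed


declare Bc.simps[simp del]
lemma Bc_Nil[simp]: "Bc [] = 1" by (subst Bc.simps) simp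
lemma Bc_snoc: "Bc (q @ [x]) = Bc q / (real (sum_list (q @ [x])) + real (length (q @ [x])))"
  by (subst Bc.simps) simp

lemma fqr_zero:
  assumes "length q = n"
  shows "fqr q (replicate n 0) \<sigma> = of_real (Bc q) * (\<i> * of_real \<sigma>) ^ (sum_list q + n)"
proof -
  have tw: "takeWhile (\<lambda>x. x = 0) (replicate n (0::nat)) = replicate n 0" by (simp add: takeWhile_eq_all_conv)
  have dw: "dropWhile (\<lambda>x. x = 0) (replicate n (0::nat)) = []" by (simp add: dropWhile_eq_Nil_conv)
  have s: "{j. length j = length ([]::nat list) \<and> idx_preceq j []} = {[]}"
    using J_Nil unfolding J_def .
  have s2: "{j::nat list. j = [] \<and> idx_preceq j []} = {[]}" by (auto simp: idx_preceq_def)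
  show ?thesis unfolding fqr_def Let_def tw dw using assms by (simp add: s s2)
qed

lemma fqr_split:
  assumes lq': "length q' = n'" and lq'': "length q'' = length r''" and rne: "r'' \<noteq> []" and h: "hd r'' \<noteq> 0"
  shows "fqr (q' @ q'') (replicate n' 0 @ r'') \<sigma> = of_real (Bc q') * Fq ((sum_list q' + n' + hd q'') # tl q'') r'' \<sigma>"
proof -
  have t0: "takeWhile (\<lambda>x. x = 0) r'' = []" using rne h by (cases r'') auto
  have d0: "dropWhile (\<lambda>x. x = 0) r'' = r''" using rne h by (cases r'') auto
  have "takeWhile (\<lambda>x. x = 0) (replicate n' 0 @ r'') = replicate n' 0 @ takeWhile (\<lambda>x. x = 0) r''"
    by (rule takeWhile_append2) auto
  then have tw: "takeWhile (\<lambda>x. x = 0) (replicate n' 0 @ r'') = replicate n' 0" by (simp add: t0)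
  have "dropWhile (\<lambda>x. x = 0) (replicate n' 0 @ r'') = dropWhile (\<lambda>x. x = 0) r''"
    by (rule dropWhile_append2) auto
  then have dw: "dropWhile (\<lambda>x. x = 0) (replicate n' 0 @ r'') = r''" by (simp add: d0)
  have qne: "q'' \<noteq> []" using lq'' rne by auto
  have sq: "sum_list ((sum_list q' + n' + hd q'') # tl q'') = sum_list (q' @ q'') + n'"
    using qne by (cases q'') auto
  have sq2: "sum_list q' + n' + hd q'' + sum_list (tl q'') = sum_list q' + sum_list q'' + n'"
    using qne by (cases q'') auto
  show ?thesis unfolding fqr_def Let_def tw dw Fq_def J_def using lq' qne
    by (simp add: sq sq2)
qed

lemma replicate_decomp:
  fixes r :: "nat list"
  obtains n' r'' where "r = replicate n' 0 @ r''" "r'' = [] \<or> hd r'' \<noteq> 0"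
proof -
  define n' where "n' = length (takeWhile (\<lambda>x. x = 0) r)"
  define r'' where "r'' = dropWhile (\<lambda>x. x = 0) r"
  have "takeWhile (\<lambda>x. x = 0) r = replicate n' 0"
    unfolding n'_def by (metis (mono_tags) replicate_length_same set_takeWhileD)
  then have "r = replicate n' 0 @ r''" unfolding r''_def by (metis takeWhile_dropWhile_id)
  moreover have "r'' = [] \<or> hd r'' \<noteq> 0" unfolding r''_def using hd_dropWhile by blast
  ultimately show ?thesis using that by blast
qed

theorem proposition1:
  fixes q r :: "nat list" and \<sigma> :: real
  assumes "length q = length r" and "length q \<ge> 1"
    and "0 < \<sigma>" and "\<sigma> < 2 * pi"
  shows "((\<lambda>s. fqr q r s) has_vector_derivative
           (\<i> * (\<i> * of_real \<sigma>) ^ last q * (Li [1] (exp (\<i> * of_real \<sigma>))) ^ last r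
              * fqr (butlast q) (butlast r) \<sigma>)) (at \<sigma>)"
proof -
  have \<sigma>: "0 < \<sigma>" "\<sigma> < 2 * pi" using assms(3,4) .
  define n where "n = length q"
  obtain n' r'' where r: "r = replicate n' 0 @ r''" and hr: "r'' = [] \<or> hd r'' \<noteq> 0"
    by (rule replicate_decomp)
  define q' where "q' = take n' q"
  define q'' where "q'' = drop n' q"
  have q: "q = q' @ q''" unfolding q'_def q''_def by simp
  have lq': "length q' = n'" unfolding q'_def using assms(1) r by simp
  have lq'': "length q'' = length r''" unfolding q''_def using assms(1) r by simp
  show ?thesis
  proof (cases "r'' = []")
    case True
    have rz: "r = replicate n 0" using r True assms(1) unfolding n_def by simp
    have qne: "q \<noteq> []" using assms(2) by auto
    obtain qb x where qb: "q = qb @ [x]" using qne by (cases q rule: rev_exhaust) auto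
    have lqb: "length qb = n - 1" using qb unfolding n_def by simp
    have br: "butlast r = replicate (n - 1) 0" using rz by (simp add: butlast_conv_take)
    have lr: "last r = 0"
    proof -
      have "r \<noteq> []" using assms(1,2) by auto
      then have "last r \<in> set r" by (rule last_in_set)
      then show ?thesis using rz by simp
    qed
    define N where "N = sum_list q + n"
    have N1: "N \<ge> 1" unfolding N_def n_def using assms(2) by simp
    have f: "(\<lambda>s. fqr q r s) = (\<lambda>s. of_real (Bc q) * (\<i> * of_real s) ^ N)"
      unfolding rz N_def using fqr_zero[of q n] n_def by simp
    have d: "((\<lambda>s. fqr q r s) has_vector_derivative
              of_real (Bc q) * (of_nat N * \<i> * (\<i> * of_real \<sigma>) ^ (N - 1))) (at \<sigma>)"
      unfolding f by (intro has_vector_derivative_mult_right pow_deriv)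
    have B: "Bc q * real N = Bc qb"
      unfolding qb Bc_snoc using N1 unfolding N_def n_def qb by (simp add: field_simps)
    have E: "N - 1 = x + (sum_list qb + (n - 1))" unfolding N_def qb using N1 n_def qb by simp
    have "of_real (Bc q) * (of_nat N * \<i> * (\<i> * of_real \<sigma>) ^ (N - 1))
          = \<i> * (\<i> * of_real \<sigma>) ^ x * (of_real (Bc q * real N) * (\<i> * of_real \<sigma>) ^ (sum_list qb + (n - 1)))"
      unfolding E by (simp add: power_add mult_ac)
    also have "\<dots> = \<i> * (\<i> * of_real \<sigma>) ^ last q * (Li [1] (exp (\<i> * of_real \<sigma>))) ^ last r
              * fqr (butlast q) (butlast r) \<sigma>"
      unfolding B br lr using fqr_zero[OF lqb, of \<sigma>] qb by simp
    finally have eq: "of_real (Bc q) * (of_nat N * \<i> * (\<i> * of_real \<sigma>) ^ (N - 1))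
       = \<i> * (\<i> * of_real \<sigma>) ^ last q * (Li [1] (exp (\<i> * of_real \<sigma>))) ^ last r
              * fqr (butlast q) (butlast r) \<sigma>" .
    show ?thesis using d unfolding eq .
  next
    case False
    have h0: "hd r'' \<noteq> 0" using hr False by simp
    obtain r3 y where r'': "r'' = r3 @ [y]" using False by (cases r'' rule: rev_exhaust) auto
    obtain q3 qn where q'': "q'' = q3 @ [qn]" using lq'' False by (cases q'' rule: rev_exhaust) auto
    have lq3: "length q3 = length r3" using lq'' r'' q'' by simp
    define S where "S = sum_list q' + n'"
    define qbar where "qbar = (S + hd q'') # tl q''"
    have fe: "(\<lambda>s. fqr q r s) = (\<lambda>s. of_real (Bc q') * Fq qbar r'' s)"
      unfolding q r qbar_def S_def using fqr_split[OF lq' lq'' False h0] by simp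
    have lqbar: "length qbar = length r''" unfolding qbar_def using lq'' False by (cases q'') auto
    have hd1: "1 \<le> hd r''" using h0 by simp
    have d: "((\<lambda>s. fqr q r s) has_vector_derivative of_real (Bc q') *
              (\<i> * (\<i> * of_real \<sigma>) ^ last qbar * Li [1] (exp (\<i> * of_real \<sigma>)) ^ last r''
                * Fq (butlast qbar) (butlast r'') \<sigma>)) (at \<sigma>)"
      unfolding fe by (intro has_vector_derivative_mult_right KL[OF lqbar False hd1 \<sigma>])
    have lr: "last r = y" unfolding r r'' by simp
    have lq: "last q = qn" unfolding q q'' by simp
    show ?thesis
    proof (cases "r3 = []")
      case True
      have q3: "q3 = []" using lq3 True by simp
      have qbar1: "qbar = [S + qn]" unfolding qbar_def q'' q3 by simp
      have br: "butlast r = replicate n' 0" unfolding r r'' True by simp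
      have bq: "butlast q = q'" unfolding q q'' q3 by simp
      have fb: "fqr (butlast q) (butlast r) \<sigma> = of_real (Bc q') * (\<i> * of_real \<sigma>) ^ S"
        unfolding br bq S_def using fqr_zero[OF lq'] by simp
      have eq: "of_real (Bc q') *
              (\<i> * (\<i> * of_real \<sigma>) ^ last qbar * Li [1] (exp (\<i> * of_real \<sigma>)) ^ last r''
                * Fq (butlast qbar) (butlast r'') \<sigma>)
            = \<i> * (\<i> * of_real \<sigma>) ^ last q * (Li [1] (exp (\<i> * of_real \<sigma>))) ^ last r
              * fqr (butlast q) (butlast r) \<sigma>"
        unfolding fb lr lq qbar1 r'' True by (simp add: Fq_Nil power_add mult_ac)
      show ?thesis using d unfolding eq .
    next
      case False
      have q3ne: "q3 \<noteq> []" using lq3 False by auto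
      have h3: "hd r3 \<noteq> 0" using h0 False unfolding r'' by simp
      have br: "butlast r = replicate n' 0 @ r3" unfolding r r'' by (simp only: append_assoc[symmetric] butlast_snoc)
      have bq: "butlast q = q' @ q3" unfolding q q'' by (simp only: append_assoc[symmetric] butlast_snoc)
      have fb: "fqr (butlast q) (butlast r) \<sigma> = of_real (Bc q') * Fq ((S + hd q3) # tl q3) r3 \<sigma>"
        unfolding br bq S_def using fqr_split[OF lq' lq3 False h3] by (simp add: add.assoc)
      have qb2: "qbar = ((S + hd q3) # tl q3) @ [qn]" unfolding qbar_def q'' using q3ne by (cases q3) auto
      have eq: "of_real (Bc q') *
              (\<i> * (\<i> * of_real \<sigma>) ^ last qbar * Li [1] (exp (\<i> * of_real \<sigma>)) ^ last r''
                * Fq (butlast qbar) (butlast r'') \<sigma>)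
            = \<i> * (\<i> * of_real \<sigma>) ^ last q * (Li [1] (exp (\<i> * of_real \<sigma>))) ^ last r
              * fqr (butlast q) (butlast r) \<sigma>"
        unfolding fb lr lq qb2 r'' butlast_snoc last_snoc by (simp add: mult_ac)
      show ?thesis using d unfolding eq .
    qed
  qed
qed


end
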